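(* There exist absolute constants $C,c>0$ such that for all $\varepsilon\in(0,1/2)$ and $\delta\in(0,1/10)$ there is a positive integer $t\le C\log^5(1/\delta)/\varepsilon^6$ with the following property: for every $n\ge c\ln^{10}(1/\delta)/\varepsilon^{10}$ for which $t$-regular graphs on $n$ nodes exist, there is an (unrestricted) $(\varepsilon,\delta)$-LNDP algorithm $\mathcal{A}$ on $n$-node graphs with outputs in $\{\text{starpartite},\text{regular}\}$ such that \[ \Pr_{G\sim\mathcal{G}^{star}_t}[\mathcal{A}(G)=\text{starpartite}]\ge\frac23\quad\text{and}\quad\Pr_{G\sim\mathcal{G}^{reg}_t}[\mathcal{A}(G)=\text{regular}]\ge\frac23. \]
   Context: Graphs are simple and undirected on node set $[n]$; $N_i^G$ is the neighborhood of node $i$. For $T\subseteq[n]$, the starpartite graph $S_T$ has edge set $\{\{i,j\}:i\in T,j\in[n],i\ne j\}$; it is $t$-starpartite if $|T|=t$. $\mathcal{G}^{reg}_t$ is the uniform distribution over $t$-regular graphs on $[n]$, and $\mathcal{G}^{star}_t$ the uniform distribution over $t$-starpartite graphs on $[n]$. Two graphs on $[n]$ are node neighbors if they differ only in edges incident to a single node. Random variables $R_1,R_2$ are $(\varepsilon,\delta)$-indistinguishable if for every event $Y$, $\Pr[R_1\in Y]\le e^\varepsilon\Pr[R_2\in Y]+\delta$ and symmetrically. An algorithm $\mathcal{A}$ on $n$-node graphs is (noninteractive) $(\varepsilon,\delta)$-LNDP if there exist a distribution over public random strings $\rho$, local randomizers $\mathcal{R}_{1,\rho},\dots,\mathcal{R}_{n,\rho}$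 (with independent internal randomness), and a postprocessing $\mathcal{P}$ with $\mathcal{A}(G)=\mathcal{P}(\mathcal{R}_{1,\rho}(N_1^G),\dots,\mathcal{R}_{n,\rho}(N_n^G))$, such that for every fixed $\rho$ and every node-neighboring $G,G'$ the randomizer output vectors on $G$ and $G'$ are $(\varepsilon,\delta)$-indistinguishable. "Unrestricted" means randomizers may depend on the whole set $N_i^G$. *)

theory Defs
  imports "HOL-Probability.Probability"
begin

(* Graphs on node set [n] = {0..<n}: a graph is a set of 2-element edges {i,j}. *)
type_synonym graph = "nat set set"

definition simple_graph :: "nat \<Rightarrow> graph \<Rightarrow> bool" where
  "simple_graph n G \<longleftrightarrow> G \<subseteq> {{i, j} | i j. i < n \<and> j < n \<and> i \<noteq> j}"

definition nbhd :: "graph \<Rightarrow> nat \<Rightarrow> nat set" where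
  "nbhd G i = {j. {i, j} \<in> G}"

definition regular_graphs :: "nat \<Rightarrow> nat \<Rightarrow> graph set" where
  "regular_graphs n t = {G. simple_graph n G \<and> (\<forall>i<n. card (nbhd G i) = t)}"

definition starpartite :: "nat \<Rightarrow> nat set \<Rightarrow> graph" where
  "starpartite n T = {{i, j} | i j. i \<in> T \<and> j < n \<and> i \<noteq> j}"

definition starpartite_graphs :: "nat \<Rightarrow> nat \<Rightarrow> graph set" where
  "starpartite_graphs n t = {starpartite n T | T. T \<subseteq> {..<n} \<and> card T = t}"

definition node_neighbors :: "nat \<Rightarrow> graph \<Rightarrow> graph \<Rightarrow> bool" where
  "node_neighbors n G G' \<longleftrightarrow> simple_graph n G \<and> simple_graph n G' \<and>
     (\<exists>v<n. \<forall>e. v \<notin> e \<longrightarrow> (e \<in> G \<longleftrightarrow> e \<in> G'))"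

definition indist :: "real \<Rightarrow> real \<Rightarrow> 'a pmf \<Rightarrow> 'a pmf \<Rightarrow> bool" where
  "indist eps delta X Y \<longleftrightarrow>
     (\<forall>A. measure_pmf.prob X A \<le> exp eps * measure_pmf.prob Y A + delta) \<and>
     (\<forall>A. measure_pmf.prob Y A \<le> exp eps * measure_pmf.prob X A + delta)"

datatype label = Starpartite | Regular

(* R rho i N : local randomizer of node i under public string rho, applied to its
   neighbourhood N (unrestricted: may depend on the whole set).
   The joint output vector: independent randomizers for i < n (value 0 for i >= n). *)
definition rand_outputs ::
  "nat \<Rightarrow> (nat \<Rightarrow> nat \<Rightarrow> nat set \<Rightarrow> nat pmf) \<Rightarrow> nat \<Rightarrow> graph \<Rightarrow> (nat \<Rightarrow> nat) pmf" where
  "rand_outputs n R rho G = Pi_pmf {..<n} 0 (\<lambda>i. R rho i (nbhd G i))"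

definition LNDP ::
  "nat \<Rightarrow> real \<Rightarrow> real \<Rightarrow> nat pmf \<Rightarrow> (nat \<Rightarrow> nat \<Rightarrow> nat set \<Rightarrow> nat pmf) \<Rightarrow> bool" where
  "LNDP n eps delta Rho R \<longleftrightarrow>
     (\<forall>rho \<in> set_pmf Rho. \<forall>G G'. node_neighbors n G G' \<longrightarrow>
        indist eps delta (rand_outputs n R rho G) (rand_outputs n R rho G'))"

definition alg_out ::
  "nat \<Rightarrow> nat pmf \<Rightarrow> (nat \<Rightarrow> nat \<Rightarrow> nat set \<Rightarrow> nat pmf) \<Rightarrow> ((nat \<Rightarrow> nat) \<Rightarrow> 'o) \<Rightarrow> graph \<Rightarrow> 'o pmf" where
  "alg_out n Rho R P G = bind_pmf Rho (\<lambda>rho. map_pmf P (rand_outputs n R rho G))"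

end

theory Submission
  imports Defs
begin


lemma exp_bind:
  fixes f :: "'b \<Rightarrow> real"
  assumes "\<And>y. \<bar>f y\<bar> \<le> B"
  shows "measure_pmf.expectation (bind_pmf p q) f = measure_pmf.expectation p (\<lambda>x. measure_pmf.expectation (q x) f)"
  unfolding measure_pmf_bind
  apply (rule integral_bind[where K="count_space UNIV" and B=B and B'=1])
  using assms apply (auto simp: measure_pmf.emeasure_space_1 prob_space_imp_subprob_space space_subprob_algebra measure_pmf.subprob_space_axioms)
  done

lemma int_bounded:
  fixes f :: "'b \<Rightarrow> real"
  assumes "\<And>y. \<bar>f y\<bar> \<le> B"
  shows "integrable (measure_pmf p) f"
  using assms by (intro measure_pmf.integrable_const_bound[where B=B]) auto

lemma exp_pair:
  fixes F :: "'a \<Rightarrow> real" and H :: "'b \<Rightarrow> real"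
  assumes a1: "\<And>y. \<bar>F y\<bar> \<le> Bx" and a2: "\<And>z. \<bar>H z\<bar> \<le> By"
  shows "measure_pmf.expectation (pair_pmf p q) (\<lambda>z. F (fst z) * H (snd z)) =
         measure_pmf.expectation p F * measure_pmf.expectation q H"
proof -
  have b1: "\<bar>F y * H z\<bar> \<le> Bx * By" for y z
    using a1[of y] a2[of z] by (simp add: abs_mult mult_mono')
  have "measure_pmf.expectation (pair_pmf p q) (\<lambda>z. F (fst z) * H (snd z)) =
     measure_pmf.expectation p (\<lambda>x. measure_pmf.expectation (bind_pmf q (\<lambda>y. return_pmf (x, y))) (\<lambda>z. F (fst z) * H (snd z)))"
    unfolding pair_pmf_def using b1 by (intro exp_bind) auto
  also have "\<dots> = measure_pmf.expectation p (\<lambda>x. measure_pmf.expectation q (\<lambda>y. F x * H y))"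
    by (subst exp_bind[where B="Bx*By"]) (use b1 in auto)
  also have "\<dots> = measure_pmf.expectation p (\<lambda>x. F x * measure_pmf.expectation q H)"
    by simp
  also have "\<dots> = measure_pmf.expectation p F * measure_pmf.expectation q H"
    by simp
  finally show ?thesis .
qed


lemma indep_blocks:
  fixes F H :: "('i \<Rightarrow> 'v) \<Rightarrow> real"
  assumes fin: "finite A" and UA: "U \<subseteq> A" and UV: "U \<inter> V = {}"
    and dF: "\<And>x x'. (\<And>i. i \<in> U \<Longrightarrow> x i = x' i) \<Longrightarrow> F x = F x'"
    and dH: "\<And>x x'. (\<And>i. i \<in> V \<Longrightarrow> x i = x' i) \<Longrightarrow> H x = H x'"
    and bF: "\<And>y. \<bar>F y\<bar> \<le> Bx" and bH: "\<And>y. \<bar>H y\<bar> \<le> By"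
  shows "measure_pmf.expectation (Pi_pmf A d p) (\<lambda>x. F x * H x) =
         measure_pmf.expectation (Pi_pmf A d p) F * measure_pmf.expectation (Pi_pmf A d p) H"
proof -
  let ?mg = "\<lambda>(f::'i\<Rightarrow>'v, g::'i\<Rightarrow>'v) x. if x \<in> U then f x else g x"
  have finU: "finite U" using fin UA finite_subset by blast
  have eq: "Pi_pmf A d p = map_pmf ?mg (pair_pmf (Pi_pmf U d p) (Pi_pmf (A - U) d p))"
  proof -
    have "A = U \<union> (A - U)" using UA by blast
    then have "Pi_pmf A d p = Pi_pmf (U \<union> (A - U)) d p" by simp
    also have "\<dots> = map_pmf ?mg (pair_pmf (Pi_pmf U d p) (Pi_pmf (A - U) d p))"
      by (rule Pi_pmf_union) (use finU fin in auto)
    finally show ?thesis .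
  qed
  have F1: "F (?mg z) = F (fst z)" for z
    by (cases z) (auto intro!: dF)
  have H1: "H (?mg z) = H (snd z)" for z
    by (cases z) (use UV in \<open>auto intro!: dH\<close>)
  have e1: "measure_pmf.expectation (Pi_pmf A d p) (\<lambda>x. F x * H x) =
     measure_pmf.expectation (Pi_pmf U d p) F * measure_pmf.expectation (Pi_pmf (A - U) d p) H"
    unfolding eq using exp_pair[OF bF bH, of "Pi_pmf U d p" "Pi_pmf (A - U) d p"] by (simp add: F1 H1 del: split_paired_all)
  have e2: "measure_pmf.expectation (Pi_pmf A d p) F = measure_pmf.expectation (Pi_pmf U d p) F"
    unfolding eq by (simp add: F1 del: split_paired_all)
  have e3: "measure_pmf.expectation (Pi_pmf A d p) H = measure_pmf.expectation (Pi_pmf (A - U) d p) H"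
    unfolding eq by (simp add: H1 del: split_paired_all)
  show ?thesis using e1 e2 e3 by simp
qed


lemma fin_Pi:
  assumes "finite A" "\<And>i. i \<in> A \<Longrightarrow> finite (set_pmf (p i))"
  shows "finite (set_pmf (Pi_pmf A d p))"
  using assms by (simp add: set_Pi_pmf finite_PiE_dflt)

lemma marg:
  fixes f :: "'v \<Rightarrow> real"
  assumes "finite A" "i \<in> A"
  shows "measure_pmf.expectation (Pi_pmf A d p) (\<lambda>x. f (x i)) = measure_pmf.expectation (p i) f"
proof -
  have "measure_pmf.expectation (Pi_pmf A d p) (\<lambda>x. f (x i)) =
        measure_pmf.expectation (map_pmf (\<lambda>x. x i) (Pi_pmf A d p)) f" by simp
  also have "map_pmf (\<lambda>x. x i) (Pi_pmf A d p) = p i" using Pi_pmf_component[OF assms(1), of i d p] assms(2) by simp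
  finally show ?thesis .
qed

definition coin :: "bool pmf" where "coin = bernoulli_pmf (1/2)"
definition sg :: "bool \<Rightarrow> real" where "sg b = (if b then 1 else -1)"

lemma sg_sq[simp]: "sg b * sg b = 1" by (simp add: sg_def)
lemma sg_not[simp]: "sg (\<not> b) = - sg b" by (simp add: sg_def)
lemma abs_sg[simp]: "\<bar>sg b\<bar> = 1" by (simp add: sg_def)
lemma exp_sg: "measure_pmf.expectation coin sg = 0"
  by (simp add: coin_def sg_def)

abbreviation CP :: "'i set \<Rightarrow> ('i \<Rightarrow> bool) pmf" where
  "CP I \<equiv> Pi_pmf I False (\<lambda>_. coin)"

lemma fin_CP: "finite I \<Longrightarrow> finite (set_pmf (CP I))"
  by (rule fin_Pi) auto

lemma int_CP[simp]: "finite I \<Longrightarrow> integrable (measure_pmf (CP I)) (f :: _ \<Rightarrow> real)"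
  by (rule integrable_measure_pmf_finite[OF fin_CP])

lemma abs_sum_sg: "finite W \<Longrightarrow> \<bar>\<Sum>w\<in>W. sg (x w)\<bar> \<le> real (card W)"
proof -
  assume "finite W"
  have "\<bar>\<Sum>w\<in>W. sg (x w)\<bar> \<le> (\<Sum>w\<in>W. \<bar>sg (x w)\<bar>)" by (rule sum_abs)
  also have "\<dots> = real (card W)" by simp
  finally show ?thesis .
qed

lemma exp_sg_x: "finite I \<Longrightarrow> a \<in> I \<Longrightarrow> measure_pmf.expectation (CP I) (\<lambda>x. sg (x a)) = 0"
  using marg[where f=sg and A=I and i=a and d=False and p="\<lambda>_. coin"] exp_sg by simp

lemma exp_sg_mult:
  assumes "finite I" "a \<in> I" "W \<subseteq> I" "a \<notin> W" "\<And>x. \<bar>H x\<bar> \<le> B"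
     "\<And>x x'. (\<And>i. i \<in> W \<Longrightarrow> x i = x' i) \<Longrightarrow> H x = H x'"
  shows "measure_pmf.expectation (CP I) (\<lambda>x. sg (x a) * H x) = 0"
proof -
  have "measure_pmf.expectation (CP I) (\<lambda>x. sg (x a) * H x) =
     measure_pmf.expectation (CP I) (\<lambda>x. sg (x a)) * measure_pmf.expectation (CP I) H"
    by (rule indep_blocks[where U="{a}" and V=W and Bx=1 and By=B]) (use assms(1,2,4,5) in \<open>auto intro: assms(6)\<close>)
  then show ?thesis using exp_sg_x[OF assms(1,2)] by simp
qed

lemma rad_moments:
  assumes fI: "finite I" and WI: "W \<subseteq> I"
  shows "measure_pmf.expectation (CP I) (\<lambda>x. (\<Sum>w\<in>W. sg (x w))^2) = real (card W) \<and>
         measure_pmf.expectation (CP I) (\<lambda>x. (\<Sum>w\<in>W. sg (x w))^4) = 3 * real (card W)^2 - 2 * real (card W)"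
proof -
  have "finite W" using fI WI finite_subset by blast
  from this WI show ?thesis
  proof (induction W rule: finite_induct)
    case empty
    then show ?case by simp
  next
    case (insert a W)
    define S where "S = (\<lambda>x. \<Sum>w\<in>W. sg (x w))"
    have aI: "a \<in> I" and WI: "W \<subseteq> I" using insert.prems by auto
    have IH2: "measure_pmf.expectation (CP I) (\<lambda>x. S x ^ 2) = real (card W)"
     and IH4: "measure_pmf.expectation (CP I) (\<lambda>x. S x ^ 4) = 3 * real (card W)^2 - 2 * real (card W)"
      using insert.IH WI by (auto simp: S_def)
    have bS: "\<bar>S x\<bar> \<le> real (card W)" for x unfolding S_def by (rule abs_sum_sg[OF insert.hyps(1)])
    have dS: "\<And>x x'. (\<And>i. i \<in> W \<Longrightarrow> x i = x' i) \<Longrightarrow> S x = S x'" unfolding S_def by (intro sum.cong) auto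
    have e1: "measure_pmf.expectation (CP I) (\<lambda>x. sg (x a) * S x) = 0"
      by (rule exp_sg_mult[OF fI aI WI insert.hyps(2) bS dS])
    have bS3: "\<bar>S x ^ 3\<bar> \<le> real (card W) ^ 3" for x
      by (metis abs_ge_zero bS power_abs power_mono)
    have e3: "measure_pmf.expectation (CP I) (\<lambda>x. sg (x a) * S x ^ 3) = 0"
      by (rule exp_sg_mult[OF fI aI WI insert.hyps(2) bS3]) (use dS in metis)
    have sum_ins: "(\<Sum>w\<in>insert a W. sg (x w)) = sg (x a) + S x" for x
      using insert.hyps by (simp add: S_def)
    have p2: "(sg (x a) + S x)^2 = 1 + 2 * (sg (x a) * S x) + S x ^ 2" for x
    proof -
      have "(sg (x a) + S x)^2 = sg (x a) * sg (x a) + 2 * (sg (x a) * S x) + S x ^ 2"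
        by (simp add: power2_eq_square algebra_simps)
      then show ?thesis by simp
    qed
    have p4: "(sg (x a) + S x)^4 = 1 + 4 * (sg (x a) * S x) + 6 * S x ^ 2 + 4 * (sg (x a) * S x ^ 3) + S x ^ 4" for x
    proof -
      have s2: "sg (x a) ^ 2 = 1" "sg (x a) ^ 3 = sg (x a)" "sg (x a) ^ 4 = 1"
        by (simp_all add: sg_def)
      have "(sg (x a) + S x)^4 = sg (x a)^4 + 4 * (sg (x a)^3 * S x) + 6 * (sg (x a)^2 * S x ^ 2) + 4 * (sg (x a) * S x ^ 3) + S x ^ 4"
        by (simp add: power4_eq_xxxx power3_eq_cube power2_eq_square algebra_simps)
      then show ?thesis using s2 by simp
    qed
    have c: "card (insert a W) = Suc (card W)" using insert.hyps by simp
    show ?case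
    proof
      show "measure_pmf.expectation (CP I) (\<lambda>x. (\<Sum>w\<in>insert a W. sg (x w))^2) = real (card (insert a W))"
        unfolding sum_ins p2 using fI e1 IH2 c by simp
      have lin: "measure_pmf.expectation (CP I) (\<lambda>x. 1 + 4 * (sg (x a) * S x) + 6 * S x ^ 2 + 4 * (sg (x a) * S x ^ 3) + S x ^ 4)
         = 1 + 4 * measure_pmf.expectation (CP I) (\<lambda>x. sg (x a) * S x) + 6 * measure_pmf.expectation (CP I) (\<lambda>x. S x ^ 2)
           + 4 * measure_pmf.expectation (CP I) (\<lambda>x. sg (x a) * S x ^ 3) + measure_pmf.expectation (CP I) (\<lambda>x. S x ^ 4)"
        using fI by simp
      show "measure_pmf.expectation (CP I) (\<lambda>x. (\<Sum>w\<in>insert a W. sg (x w))^4) = 3 * real (card (insert a W))^2 - 2 * real (card (insert a W))"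
        unfolding sum_ins p4 lin e1 e3 IH2 IH4 c by (simp add: algebra_simps power2_eq_square)
    qed
  qed
qed

definition flipW :: "'i set \<Rightarrow> ('i \<Rightarrow> bool) \<Rightarrow> ('i \<Rightarrow> bool)" where
  "flipW W x = (\<lambda>i. if i \<in> W then \<not> x i else x i)"

lemma flipW_flipW[simp]: "flipW W (flipW W x) = x"
  by (auto simp: flipW_def)

lemma inj_flipW: "inj (flipW W)"
  by (metis flipW_flipW injI)

lemma CP_flip:
  assumes fI: "finite I" and WI: "W \<subseteq> I"
  shows "map_pmf (flipW W) (CP I) = CP I"
proof (rule pmf_eqI)
  fix y
  have "pmf (map_pmf (flipW W) (CP I)) y = pmf (map_pmf (flipW W) (CP I)) (flipW W (flipW W y))" by simp
  also have "\<dots> = pmf (CP I) (flipW W y)" by (rule pmf_map_inj'[OF inj_flipW])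
  also have "\<dots> = pmf (CP I) y"
    using fI WI by (auto simp: pmf_Pi flipW_def coin_def)
  finally show "pmf (map_pmf (flipW W) (CP I)) y = pmf (CP I) y" .
qed

lemma odd_zero:
  fixes \<phi> :: "real \<Rightarrow> real"
  assumes fI: "finite I" and WI: "W \<subseteq> I" and odd: "\<And>z. \<phi> (-z) = - \<phi> z"
  shows "measure_pmf.expectation (CP I) (\<lambda>x. \<phi> (\<Sum>w\<in>W. sg (x w))) = 0"
proof -
  let ?F = "\<lambda>x. \<phi> (\<Sum>w\<in>W. sg (x w))"
  have "measure_pmf.expectation (CP I) ?F = measure_pmf.expectation (map_pmf (flipW W) (CP I)) ?F"
    using CP_flip[OF fI WI] by simp
  also have "\<dots> = measure_pmf.expectation (CP I) (\<lambda>x. ?F (flipW W x))" by simp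
  also have "(\<lambda>x. ?F (flipW W x)) = (\<lambda>x. - ?F x)"
  proof
    fix x
    have "(\<Sum>w\<in>W. sg (flipW W x w)) = - (\<Sum>w\<in>W. sg (x w))"
      by (simp add: flipW_def sum_negf[symmetric])
    then show "?F (flipW W x) = - ?F x" using odd by simp
  qed
  also have "measure_pmf.expectation (CP I) (\<lambda>x. - ?F x) = - measure_pmf.expectation (CP I) ?F" by simp
  finally show ?thesis by simp
qed

definition clip :: "real \<Rightarrow> real" where "clip z = max (-1) (min 1 z)"

lemma clip_odd: "clip (-z) = - clip z" by (simp add: clip_def)
lemma abs_clip: "\<bar>clip z\<bar> \<le> 1" by (simp add: clip_def)
lemma clip_lip: "\<bar>clip a - clip b\<bar> \<le> \<bar>a - b\<bar>" by (simp add: clip_def)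
lemma clip_sq_lower: "clip z ^ 2 \<ge> z^2 - z^4 / 4"
proof (cases "\<bar>z\<bar> \<le> 1")
  case True
  then have "clip z = z" by (auto simp: clip_def)
  then show ?thesis by simp
next
  case False
  then have "clip z = 1 \<or> clip z = -1" by (auto simp: clip_def)
  then have "clip z ^ 2 = 1" by auto
  moreover have "(z^2 - 2)^2 \<ge> 0" by simp
  ultimately show ?thesis by (simp add: power2_eq_square power4_eq_xxxx algebra_simps)
qed


definition is_rep :: "nat \<Rightarrow> (nat \<Rightarrow> nat) \<Rightarrow> nat \<Rightarrow> bool" where
  "is_rep RR s i = (\<exists>j<RR. s j = i)"

definition first_slot :: "nat \<Rightarrow> (nat \<Rightarrow> nat) \<Rightarrow> nat \<Rightarrow> nat" where
  "first_slot RR s i = (LEAST j. j < RR \<and> s j = i)"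

definition qv :: "nat \<Rightarrow> real \<Rightarrow> (nat \<times> nat \<Rightarrow> bool) \<Rightarrow> nat \<Rightarrow> nat set \<Rightarrow> real" where
  "qv n D g k N = clip ((\<Sum>u\<in>N \<inter> {..<n}. sg (g (k, u))) / D)"

definition th :: "real \<Rightarrow> real \<Rightarrow> real" where
  "th \<beta> q = (1 + \<beta> * q) / 2"

definition enc_out :: "nat \<Rightarrow> bool \<Rightarrow> nat" where
  "enc_out j b = Suc (2 * j + (if b then 1 else 0))"

definition node_out :: "nat \<Rightarrow> nat \<Rightarrow> nat \<Rightarrow> real \<Rightarrow> real \<Rightarrow> (nat \<Rightarrow> nat) \<Rightarrow> (nat \<times> nat \<Rightarrow> bool) \<Rightarrow> nat \<Rightarrow> nat set \<Rightarrow> nat pmf" where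
  "node_out n m RR \<beta> D s g i N = (if is_rep RR s i then
     map_pmf (enc_out (first_slot RR s i)) (bernoulli_pmf (th \<beta> (qv n D g (first_slot RR s i div (2*m)) N)))
   else return_pmf 0)"

lemma abs_qv: "\<bar>qv n D g k N\<bar> \<le> 1" by (simp add: qv_def abs_clip)

lemma inj_enc_out: "inj (enc_out j)"
  by (rule injI) (auto simp: enc_out_def split: if_splits)

lemma th_bounds: "0 \<le> \<beta> \<Longrightarrow> \<beta> \<le> 1 \<Longrightarrow> \<bar>q\<bar> \<le> 1 \<Longrightarrow> 0 \<le> th \<beta> q \<and> th \<beta> q \<le> 1"
proof -
  assume a: "0 \<le> \<beta>" "\<beta> \<le> 1" "\<bar>q\<bar> \<le> 1"
  have "\<bar>\<beta> * q\<bar> \<le> 1" using a by (simp add: abs_mult mult_le_one)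
  then show ?thesis by (auto simp: th_def)
qed

lemma pmf_map_bern:
  assumes "inj f" "0 \<le> p" "p \<le> 1"
  shows "pmf (map_pmf f (bernoulli_pmf p)) w = (if w = f True then p else if w = f False then 1 - p else 0)"
proof (cases "w \<in> range f")
  case True
  then obtain b where w: "w = f b" by auto
  have "pmf (map_pmf f (bernoulli_pmf p)) (f b) = pmf (bernoulli_pmf p) b" by (rule pmf_map_inj'[OF assms(1)])
  then show ?thesis using w assms by (cases b) (auto dest: injD)
next
  case False
  then have "pmf (map_pmf f (bernoulli_pmf p)) w = 0" by (intro pmf_map_outside) auto
  then show ?thesis using False by auto
qed

lemma nbhd_diff:
  assumes "\<forall>e. v \<notin> e \<longrightarrow> (e \<in> G \<longleftrightarrow> e \<in> G')" "i \<noteq> v"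
  shows "nbhd G i - {v} = nbhd G' i - {v}"
  using assms by (auto simp: nbhd_def)

lemma sum_split_v:
  fixes f :: "nat \<Rightarrow> real"
  shows "(\<Sum>u\<in>N \<inter> {..<n}. f u) = (\<Sum>u\<in>(N - {v}) \<inter> {..<n}. f u) + (if v \<in> N \<inter> {..<n} then f v else 0)"
proof (cases "v \<in> N \<inter> {..<n}")
  case True
  have "(\<Sum>u\<in>N \<inter> {..<n}. f u) = f v + (\<Sum>u\<in>N \<inter> {..<n} - {v}. f u)"
    by (rule sum.remove) (use True in auto)
  moreover have "N \<inter> {..<n} - {v} = (N - {v}) \<inter> {..<n}" by auto
  ultimately show ?thesis using True by simp
next
  case False
  then have "N \<inter> {..<n} = (N - {v}) \<inter> {..<n}" by auto
  then show ?thesis using False by simp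
qed

lemma qv_sens:
  assumes "N - {v} = N' - {v}" "D > 0"
  shows "\<bar>qv n D g k N - qv n D g k N'\<bar> \<le> 1 / D"
proof -
  let ?f = "\<lambda>u. sg (g (k, u))"
  have "(\<Sum>u\<in>N \<inter> {..<n}. ?f u) - (\<Sum>u\<in>N' \<inter> {..<n}. ?f u) =
        (if v \<in> N \<inter> {..<n} then ?f v else 0) - (if v \<in> N' \<inter> {..<n} then ?f v else 0)"
    using sum_split_v[of ?f N n v] sum_split_v[of ?f N' n v] assms(1) by simp
  then have d: "\<bar>(\<Sum>u\<in>N \<inter> {..<n}. ?f u) - (\<Sum>u\<in>N' \<inter> {..<n}. ?f u)\<bar> \<le> 1"
    by (auto simp: sg_def)
  have "\<bar>qv n D g k N - qv n D g k N'\<bar> \<le> \<bar>(\<Sum>u\<in>N \<inter> {..<n}. ?f u) / D - (\<Sum>u\<in>N' \<inter> {..<n}. ?f u) / D\<bar>"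
    unfolding qv_def by (rule clip_lip)
  also have "\<dots> = \<bar>(\<Sum>u\<in>N \<inter> {..<n}. ?f u) - (\<Sum>u\<in>N' \<inter> {..<n}. ?f u)\<bar> / D"
    using assms(2) by (simp add: diff_divide_distrib[symmetric])
  also have "\<dots> \<le> 1 / D" using d assms(2) by (simp add: divide_right_mono)
  finally show ?thesis .
qed

lemma ratio_gen:
  fixes \<beta> q q' \<Delta> :: real
  assumes "0 \<le> \<beta>" "\<beta> \<le> 1/2" "\<bar>q\<bar> \<le> 1" "\<bar>q'\<bar> \<le> 1" "\<bar>q - q'\<bar> \<le> \<Delta>"
  shows "th \<beta> q \<le> exp (2 * \<beta> * \<Delta>) * th \<beta> q' \<and> 1 - th \<beta> q \<le> exp (2 * \<beta> * \<Delta>) * (1 - th \<beta> q')"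
proof -
  have D0: "\<Delta> \<ge> 0" using assms(5) by linarith
  have bq: "\<bar>\<beta> * q'\<bar> \<le> 1/2" using assms by (simp add: abs_mult) (metis (no_types) abs_ge_zero mult_le_one mult.commute mult_mono order_trans assms(3,4) abs_of_nonneg le_divide_eq_numeral1(1) mult.right_neutral)
  have bd: "\<bar>\<beta> * q - \<beta> * q'\<bar> \<le> \<beta> * \<Delta>"
    using assms by (simp add: right_diff_distrib[symmetric] abs_mult mult_left_mono)
  have e: "1 + 2 * \<beta> * \<Delta> \<le> exp (2 * \<beta> * \<Delta>)" by (rule exp_ge_add_one_self_aux) (use assms D0 in simp)
  have bD: "0 \<le> \<beta> * \<Delta>" using assms D0 by simp
  have k1: "1 + \<beta> * q \<le> (1 + 2 * \<beta> * \<Delta>) * (1 + \<beta> * q')"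
  proof -
    have "(1 + 2 * \<beta> * \<Delta>) * (1 + \<beta> * q') = 1 + \<beta> * q' + 2 * (\<beta> * \<Delta>) * (1 + \<beta> * q')" by (simp add: algebra_simps)
    moreover have "2 * (\<beta> * \<Delta>) * (1 + \<beta> * q') \<ge> 2 * (\<beta> * \<Delta>) * (1/2)"
      using bq bD by (intro mult_left_mono) auto
    ultimately show ?thesis using bd by simp
  qed
  have k2: "1 - \<beta> * q \<le> (1 + 2 * \<beta> * \<Delta>) * (1 - \<beta> * q')"
  proof -
    have "(1 + 2 * \<beta> * \<Delta>) * (1 - \<beta> * q') = 1 - \<beta> * q' + 2 * (\<beta> * \<Delta>) * (1 - \<beta> * q')" by (simp add: algebra_simps)
    moreover have "2 * (\<beta> * \<Delta>) * (1 - \<beta> * q') \<ge> 2 * (\<beta> * \<Delta>) * (1/2)"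
      using bq bD by (intro mult_left_mono) auto
    ultimately show ?thesis using bd by simp
  qed
  have p1: "0 \<le> 1 + \<beta> * q'" "0 \<le> 1 - \<beta> * q'" using bq by auto
  have "1 + \<beta> * q \<le> exp (2 * \<beta> * \<Delta>) * (1 + \<beta> * q')"
    using k1 e p1 by (meson mult_right_mono order_trans)
  moreover have "1 - \<beta> * q \<le> exp (2 * \<beta> * \<Delta>) * (1 - \<beta> * q')"
    using k2 e p1 by (meson mult_right_mono order_trans)
  ultimately show ?thesis by (auto simp: th_def field_simps)
qed


lemma coord_ratio:
  assumes b0: "0 \<le> \<beta>" and b1: "\<beta> \<le> 1/2" and D0: "D > 0"
    and hG: "\<forall>e. v \<notin> e \<longrightarrow> (e \<in> G \<longleftrightarrow> e \<in> G')"
  shows "pmf (node_out n m RR \<beta> D s g i (nbhd G i)) w \<le>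
         exp (if is_rep RR s i then (if i = v then 4 * \<beta> else 2 * \<beta> / D) else 0) *
         pmf (node_out n m RR \<beta> D s g i (nbhd G' i)) w"
proof (cases "is_rep RR s i")
  case False
  then show ?thesis by (simp add: node_out_def)
next
  case True
  define j where "j = first_slot RR s i"
  define q where "q = qv n D g (j div (2*m)) (nbhd G i)"
  define q' where "q' = qv n D g (j div (2*m)) (nbhd G' i)"
  define \<Delta> where "\<Delta> = (if i = v then 2 else 1 / D)"
  have qb: "\<bar>q\<bar> \<le> 1" "\<bar>q'\<bar> \<le> 1" unfolding q_def q'_def by (rule abs_qv)+
  have dq: "\<bar>q - q'\<bar> \<le> \<Delta>"
  proof (cases "i = v")
    case True
    then show ?thesis using qb by (simp add: \<Delta>_def)
  next
    case False
    then show ?thesis unfolding \<Delta>_def q_def q'_def using qv_sens[OF nbhd_diff[OF hG False] D0] by simp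
  qed
  have r: "th \<beta> q \<le> exp (2 * \<beta> * \<Delta>) * th \<beta> q' \<and> 1 - th \<beta> q \<le> exp (2 * \<beta> * \<Delta>) * (1 - th \<beta> q')"
    by (rule ratio_gen[OF b0 b1 qb dq])
  have ce: "(if is_rep RR s i then (if i = v then 4 * \<beta> else 2 * \<beta> / D) else 0) = 2 * \<beta> * \<Delta>"
    using True by (simp add: \<Delta>_def)
  have tb: "0 \<le> th \<beta> q \<and> th \<beta> q \<le> 1" "0 \<le> th \<beta> q' \<and> th \<beta> q' \<le> 1"
    using th_bounds[of \<beta> q] th_bounds[of \<beta> q'] b0 b1 qb by auto
  have e1: "pmf (node_out n m RR \<beta> D s g i (nbhd G i)) w =
     (if w = enc_out j True then th \<beta> q else if w = enc_out j False then 1 - th \<beta> q else 0)"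
    unfolding node_out_def using True tb by (simp add: j_def[symmetric] q_def[symmetric] pmf_map_bern[OF inj_enc_out])
  have e2: "pmf (node_out n m RR \<beta> D s g i (nbhd G' i)) w =
     (if w = enc_out j True then th \<beta> q' else if w = enc_out j False then 1 - th \<beta> q' else 0)"
    unfolding node_out_def using True tb by (simp add: j_def[symmetric] q'_def[symmetric] pmf_map_bern[OF inj_enc_out])
  show ?thesis unfolding ce e1 e2 using r by auto
qed

lemma priv_pmf:
  assumes b0: "0 \<le> \<beta>" and b1: "\<beta> \<le> 1/2" and D0: "D > 0"
    and hG: "\<forall>e. v \<notin> e \<longrightarrow> (e \<in> G \<longleftrightarrow> e \<in> G')"
  shows "pmf (Pi_pmf {..<n} 0 (\<lambda>i. node_out n m RR \<beta> D s g i (nbhd G i))) x \<le>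
         exp (4 * \<beta> + 2 * \<beta> * RR / D) * pmf (Pi_pmf {..<n} 0 (\<lambda>i. node_out n m RR \<beta> D s g i (nbhd G' i))) x"
proof -
  define cc where "cc i = (if is_rep RR s i then (if i = v then 4 * \<beta> else 2 * \<beta> / D) else 0)" for i
  let ?p = "\<lambda>i. node_out n m RR \<beta> D s g i (nbhd G i)"
  let ?p' = "\<lambda>i. node_out n m RR \<beta> D s g i (nbhd G' i)"
  have sumcc: "(\<Sum>i<n. cc i) \<le> 4 * \<beta> + 2 * \<beta> * RR / D"
  proof -
    have "(\<Sum>i<n. cc i) \<le> (\<Sum>i<n. (if i = v then 4 * \<beta> else 0) + (if is_rep RR s i then 2 * \<beta> / D else 0))"
      by (intro sum_mono) (use b0 D0 in \<open>auto simp: cc_def\<close>)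
    also have "\<dots> = (\<Sum>i<n. (if i = v then 4 * \<beta> else 0)) + (\<Sum>i<n. (if is_rep RR s i then 2 * \<beta> / D else 0))"
      by (rule sum.distrib)
    also have "(\<Sum>i<n. (if i = v then 4 * \<beta> else 0)) \<le> 4 * \<beta>"
      using b0 by (simp add: sum.delta)
    also have "(\<Sum>i<n. (if is_rep RR s i then 2 * \<beta> / D else 0)) = (2 * \<beta> / D) * card {i\<in>{..<n}. is_rep RR s i}"
      by (simp add: sum.If_cases Int_def conj_commute)
    also have "card {i\<in>{..<n}. is_rep RR s i} \<le> RR"
    proof -
      have "{i\<in>{..<n}. is_rep RR s i} \<subseteq> s ` {..<RR}" by (auto simp: is_rep_def)
      then have "card {i\<in>{..<n}. is_rep RR s i} \<le> card (s ` {..<RR})" by (intro card_mono) auto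
      also have "\<dots> \<le> card {..<RR}" by (rule card_image_le) auto
      finally show ?thesis by simp
    qed
    then have "(2 * \<beta> / D) * card {i\<in>{..<n}. is_rep RR s i} \<le> (2 * \<beta> / D) * RR"
      using b0 D0 by (intro mult_left_mono) auto
    finally show ?thesis by simp
  qed
  have pr: "(\<Prod>i<n. pmf (?p i) (x i)) \<le> exp (4 * \<beta> + 2 * \<beta> * RR / D) * (\<Prod>i<n. pmf (?p' i) (x i))"
  proof -
    have "(\<Prod>i<n. pmf (?p i) (x i)) \<le> (\<Prod>i<n. exp (cc i) * pmf (?p' i) (x i))"
      by (intro prod_mono conjI pmf_nonneg) (unfold cc_def, rule coord_ratio[OF b0 b1 D0 hG])
    also have "\<dots> = exp (\<Sum>i<n. cc i) * (\<Prod>i<n. pmf (?p' i) (x i))"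
      by (simp add: prod.distrib exp_sum)
    also have "\<dots> \<le> exp (4 * \<beta> + 2 * \<beta> * RR / D) * (\<Prod>i<n. pmf (?p' i) (x i))"
      using sumcc by (intro mult_right_mono) (auto intro: prod_nonneg)
    finally show ?thesis .
  qed
  show ?thesis
    using pr by (auto simp: pmf_Pi)
qed

lemma prob_from_pmf:
  assumes "\<And>x. pmf X x \<le> c * pmf Y x" "c \<ge> 0"
  shows "measure_pmf.prob X A \<le> c * measure_pmf.prob Y A"
proof -
  have "measure_pmf.prob X A = infsetsum (pmf X) A" by (rule measure_pmf_conv_infsetsum)
  also have "\<dots> \<le> infsetsum (\<lambda>x. c * pmf Y x) A"
    by (intro infsetsum_mono assms) (auto intro: abs_summable_on_cmult_right)
  also have "\<dots> = c * infsetsum (pmf Y) A" by (rule infsetsum_cmult_right) auto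
  also have "\<dots> = c * measure_pmf.prob Y A" by (simp add: measure_pmf_conv_infsetsum)
  finally show ?thesis .
qed


definition yv :: "nat \<Rightarrow> real" where "yv w = (if (w - 1) mod 2 = 1 then 1 else -1)"

lemma yv_enc[simp]: "yv (enc_out j b) = sg b"
  by (simp add: yv_def enc_out_def sg_def)

lemma abs_yv[simp]: "\<bar>yv w\<bar> = 1" by (simp add: yv_def)
lemma yv_sq[simp]: "yv w * yv w = 1" by (simp add: yv_def)

definition Aset :: "nat \<Rightarrow> nat \<Rightarrow> nat set" where "Aset m k = {2*m*k ..< 2*m*k + m}"
definition Bset :: "nat \<Rightarrow> nat \<Rightarrow> nat set" where "Bset m k = {2*m*k + m ..< 2*m*k + 2*m}"

lemma card_Aset[simp]: "card (Aset m k) = m" by (simp add: Aset_def)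
lemma card_Bset[simp]: "card (Bset m k) = m" by (simp add: Bset_def)
lemma AB_disj: "Aset m k \<inter> Bset m k = {}" by (auto simp: Aset_def Bset_def)
lemma AB_div: "j \<in> Aset m k \<union> Bset m k \<Longrightarrow> j div (2*m) = k"
proof -
  assume j: "j \<in> Aset m k \<union> Bset m k"
  then have "2*m*k \<le> j" "j < 2*m*k + 2*m" by (auto simp: Aset_def Bset_def)
  then show ?thesis
    by (intro div_nat_eqI) (auto simp: mult.commute)
qed
lemma AB_lt: "k < r \<Longrightarrow> j \<in> Aset m k \<union> Bset m k \<Longrightarrow> j < 2*r*m"
proof -
  assume k: "k < r" and j: "j \<in> Aset m k \<union> Bset m k"
  then have "j < 2*m*k + 2*m" by (auto simp: Aset_def Bset_def)
  also have "\<dots> = 2*m*(Suc k)" by simp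
  also have "\<dots> \<le> 2*m*r" using k by (intro mult_le_mono2) auto
  finally show ?thesis by (simp add: mult.commute mult.left_commute)
qed
lemma AB_disj2: "k \<noteq> l \<Longrightarrow> (Aset m k \<union> Bset m k) \<inter> (Aset m l \<union> Bset m l) = {}"
  using AB_div by blast

locale core =
  fixes n m r :: nat and \<beta> D :: real and s :: "nat \<Rightarrow> nat" and G :: graph
  assumes m0: "m > 0" and b0: "0 \<le> \<beta>" and b1: "\<beta> \<le> 1/2" and D0: "D > 0"
    and sinj: "inj_on s {..<2*r*m}" and srange: "\<And>j. j < 2*r*m \<Longrightarrow> s j < n"
begin

abbreviation "RR \<equiv> 2*r*m"

definition OutP :: "(nat \<times> nat \<Rightarrow> bool) \<Rightarrow> (nat \<Rightarrow> nat) pmf" where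
  "OutP g = Pi_pmf {..<n} 0 (\<lambda>i. node_out n m RR \<beta> D s g i (nbhd G i))"

definition qq :: "(nat \<times> nat \<Rightarrow> bool) \<Rightarrow> nat \<Rightarrow> real" where
  "qq g j = qv n D g (j div (2*m)) (nbhd G (s j))"

definition Ys :: "nat \<Rightarrow> (nat \<Rightarrow> nat) \<Rightarrow> real" where "Ys j x = yv (x (s j))"

definition av :: "nat set \<Rightarrow> (nat \<Rightarrow> nat) \<Rightarrow> real" where
  "av J x = (\<Sum>j\<in>J. Ys j x) / m"

definition Zk :: "nat \<Rightarrow> (nat \<Rightarrow> nat) \<Rightarrow> real" where
  "Zk k x = av (Aset m k) x * av (Bset m k) x"

lemma rep_s: "j < RR \<Longrightarrow> is_rep RR s (s j)"
  by (auto simp: is_rep_def)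

lemma first_s: "j < RR \<Longrightarrow> first_slot RR s (s j) = j"
  unfolding first_slot_def
proof (rule Least_equality)
  assume "j < RR" then show "j < RR \<and> s j = s j" by simp
next
  fix y assume "j < RR" "y < RR \<and> s y = s j"
  then have "y = j" using sinj by (auto dest: inj_onD)
  then show "j \<le> y" by simp
qed

lemma node_s: "j < RR \<Longrightarrow> node_out n m RR \<beta> D s g (s j) (nbhd G (s j)) =
   map_pmf (enc_out j) (bernoulli_pmf (th \<beta> (qq g j)))"
  by (simp add: node_out_def rep_s first_s qq_def)

lemma abs_qq: "\<bar>qq g j\<bar> \<le> 1" by (simp add: qq_def abs_qv)

lemma th_qq: "0 \<le> th \<beta> (qq g j) \<and> th \<beta> (qq g j) \<le> 1"
  using th_bounds[of \<beta> "qq g j"] b0 b1 abs_qq by auto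

lemma fin_OutP: "finite (set_pmf (OutP g))"
  unfolding OutP_def by (rule fin_Pi) (auto simp: node_out_def)

lemma int_OutP[simp]: "integrable (measure_pmf (OutP g)) (f :: _ \<Rightarrow> real)"
  by (rule integrable_measure_pmf_finite[OF fin_OutP])

lemma abs_Ys[simp]: "\<bar>Ys j x\<bar> \<le> 1" by (simp add: Ys_def)
lemma Ys_sq[simp]: "Ys j x * Ys j x = 1" by (simp add: Ys_def)

lemma E_Ys: "j < RR \<Longrightarrow> measure_pmf.expectation (OutP g) (Ys j) = \<beta> * qq g j"
proof -
  assume j: "j < RR"
  have "measure_pmf.expectation (OutP g) (Ys j) = measure_pmf.expectation (node_out n m RR \<beta> D s g (s j) (nbhd G (s j))) yv"
    unfolding OutP_def Ys_def by (rule marg) (use srange[OF j] in auto)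
  also have "\<dots> = th \<beta> (qq g j) - (1 - th \<beta> (qq g j))"
    using th_qq[of g j] by (simp add: node_s[OF j] sg_def)
  also have "\<dots> = \<beta> * qq g j" by (simp add: th_def)
  finally show ?thesis .
qed

lemma E_indep:
  fixes F H :: "(nat \<Rightarrow> nat) \<Rightarrow> real" and Bx By :: real
  assumes "U \<subseteq> {..<RR}" "V \<subseteq> {..<RR}" "U \<inter> V = {}"
    and dF: "\<And>x x'. (\<And>j. j \<in> U \<Longrightarrow> x (s j) = x' (s j)) \<Longrightarrow> F x = F x'"
    and dH: "\<And>x x'. (\<And>j. j \<in> V \<Longrightarrow> x (s j) = x' (s j)) \<Longrightarrow> H x = H x'"
    and bF: "\<And>y. \<bar>F y\<bar> \<le> Bx" and bH: "\<And>y. \<bar>H y\<bar> \<le> By"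
  shows "measure_pmf.expectation (OutP g) (\<lambda>x. F x * H x) =
         measure_pmf.expectation (OutP g) F * measure_pmf.expectation (OutP g) H"
  unfolding OutP_def
proof (rule indep_blocks[where U="s ` U" and V="s ` V" and Bx=Bx and By=By])
  show "s ` U \<subseteq> {..<n}" using assms(1) srange by auto
  show "s ` U \<inter> s ` V = {}"
    using assms(1-3) sinj by (auto dest: inj_onD)
  show "F x = F x'" if "\<And>i. i \<in> s ` U \<Longrightarrow> x i = x' i" for x x' using that by (intro dF) auto
  show "H x = H x'" if "\<And>i. i \<in> s ` V \<Longrightarrow> x i = x' i" for x x' using that by (intro dH) auto
qed (use bF bH in auto)

lemma E_pair:
  assumes "j < RR" "j' < RR" "j \<noteq> j'"
  shows "measure_pmf.expectation (OutP g) (\<lambda>x. Ys j x * Ys j' x) = (\<beta> * qq g j) * (\<beta> * qq g j')"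
proof -
  have "measure_pmf.expectation (OutP g) (\<lambda>x. Ys j x * Ys j' x) =
     measure_pmf.expectation (OutP g) (Ys j) * measure_pmf.expectation (OutP g) (Ys j')"
    by (rule E_indep[where U="{j}" and V="{j'}" and Bx=1 and By=1]) (use assms in \<open>auto simp: Ys_def\<close>)
  then show ?thesis using E_Ys assms by simp
qed

lemma E_sq_sum:
  assumes J: "J \<subseteq> {..<RR}"
  shows "measure_pmf.expectation (OutP g) (\<lambda>x. (\<Sum>j\<in>J. Ys j x)^2) \<le>
         card J + (\<Sum>j\<in>J. \<beta> * qq g j)^2"
proof -
  have fJ: "finite J" using J finite_subset by blast
  let ?mu = "\<lambda>j. \<beta> * qq g j"
  have "(\<lambda>x. (\<Sum>j\<in>J. Ys j x)^2) = (\<lambda>x. \<Sum>j\<in>J. \<Sum>j'\<in>J. Ys j x * Ys j' x)"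
    by (simp add: power2_eq_square sum_product)
  then have "measure_pmf.expectation (OutP g) (\<lambda>x. (\<Sum>j\<in>J. Ys j x)^2) =
      (\<Sum>j\<in>J. \<Sum>j'\<in>J. measure_pmf.expectation (OutP g) (\<lambda>x. Ys j x * Ys j' x))"
    by simp
  also have "\<dots> = (\<Sum>j\<in>J. \<Sum>j'\<in>J. if j = j' then 1 else ?mu j * ?mu j')"
  proof (intro sum.cong refl)
    fix j j' assume jj: "j \<in> J" "j' \<in> J"
    then have "j < RR" "j' < RR" using J by auto
    then show "measure_pmf.expectation (OutP g) (\<lambda>x. Ys j x * Ys j' x) = (if j = j' then 1 else ?mu j * ?mu j')"
      using E_pair[of j j' g] by auto
  qed
  also have "\<dots> = (\<Sum>j\<in>J. \<Sum>j'\<in>J. ?mu j * ?mu j' + (if j = j' then 1 - ?mu j * ?mu j' else 0))"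
    by (intro sum.cong refl) auto
  also have "\<dots> = (\<Sum>j\<in>J. ?mu j)^2 + (\<Sum>j\<in>J. (1 - ?mu j * ?mu j))"
    using fJ by (simp add: sum.distrib power2_eq_square sum_product sum.delta)
  also have "\<dots> \<le> (\<Sum>j\<in>J. ?mu j)^2 + card J"
  proof -
    have "(\<Sum>j\<in>J. (1 - ?mu j * ?mu j)) \<le> (\<Sum>j\<in>J. 1)" by (intro sum_mono) auto
    then show ?thesis by simp
  qed
  finally show ?thesis by simp
qed


lemma AB_sub: "k < r \<Longrightarrow> Aset m k \<subseteq> {..<RR}" "k < r \<Longrightarrow> Bset m k \<subseteq> {..<RR}"
  using AB_lt[of k r _ m] by auto

lemma abs_av: "card J = m \<Longrightarrow> \<bar>av J x\<bar> \<le> 1"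
proof -
  assume c: "card J = m"
  have "\<bar>\<Sum>j\<in>J. Ys j x\<bar> \<le> (\<Sum>j\<in>J. \<bar>Ys j x\<bar>)" by (rule sum_abs)
  also have "\<dots> \<le> (\<Sum>j\<in>J. 1)" by (intro sum_mono) auto
  also have "\<dots> = m" using c by simp
  finally have h: "\<bar>\<Sum>j\<in>J. Ys j x\<bar> \<le> real m" .
  have "\<bar>\<Sum>j\<in>J. Ys j x\<bar> / real m \<le> real m / real m" by (rule divide_right_mono[OF h]) simp
  also have "\<dots> = 1" using m0 by simp
  finally show ?thesis unfolding av_def abs_divide by simp
qed

lemma abs_Zk: "\<bar>Zk k x\<bar> \<le> 1"
  unfolding Zk_def abs_mult using abs_av[of "Aset m k" x] abs_av[of "Bset m k" x]
  by (simp add: mult_le_one)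

lemma dep_av: "(\<And>j. j \<in> J \<Longrightarrow> x (s j) = x' (s j)) \<Longrightarrow> av J x = av J x'"
  unfolding av_def Ys_def by (intro arg_cong[where f="\<lambda>z. z / real m"] sum.cong) auto

lemma E_av: "J \<subseteq> {..<RR} \<Longrightarrow> measure_pmf.expectation (OutP g) (av J) = (\<Sum>j\<in>J. \<beta> * qq g j) / m"
proof -
  assume J: "J \<subseteq> {..<RR}"
  have "measure_pmf.expectation (OutP g) (av J) = (\<Sum>j\<in>J. measure_pmf.expectation (OutP g) (Ys j)) / m"
    unfolding av_def by simp
  also have "\<dots> = (\<Sum>j\<in>J. \<beta> * qq g j) / m"
    using J by (intro arg_cong[where f="\<lambda>z. z / real m"] sum.cong) (auto simp: E_Ys)
  finally show ?thesis .
qed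

lemma E_av_sq: "J \<subseteq> {..<RR} \<Longrightarrow> card J = m \<Longrightarrow> measure_pmf.expectation (OutP g) (\<lambda>x. av J x ^ 2) \<le> 1/m + \<beta>^2"
proof -
  assume J: "J \<subseteq> {..<RR}" and c: "card J = m"
  have mb: "\<bar>\<Sum>j\<in>J. \<beta> * qq g j\<bar> \<le> m * \<beta>"
  proof -
    have "\<bar>\<Sum>j\<in>J. \<beta> * qq g j\<bar> \<le> (\<Sum>j\<in>J. \<bar>\<beta> * qq g j\<bar>)" by (rule sum_abs)
    also have "\<dots> \<le> (\<Sum>j\<in>J. \<beta>)"
      by (intro sum_mono) (use b0 abs_qq in \<open>auto simp: abs_mult intro: mult_left_le\<close>)
    also have "\<dots> = m * \<beta>" using c by simp
    finally show ?thesis .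
  qed
  have sq: "(\<Sum>j\<in>J. \<beta> * qq g j)^2 \<le> (m * \<beta>)^2"
    using power_mono[OF mb abs_ge_zero, of 2] by simp
  have "measure_pmf.expectation (OutP g) (\<lambda>x. av J x ^ 2) = measure_pmf.expectation (OutP g) (\<lambda>x. (\<Sum>j\<in>J. Ys j x)^2) / m^2"
    unfolding av_def by (simp add: power_divide)
  also have "\<dots> \<le> (m + (m * \<beta>)^2) / m^2"
  proof (rule divide_right_mono)
    show "measure_pmf.expectation (OutP g) (\<lambda>x. (\<Sum>j\<in>J. Ys j x)^2) \<le> m + (m * \<beta>)^2"
      using E_sq_sum[OF J, of g] sq c by linarith
  qed simp
  also have "\<dots> = 1/m + \<beta>^2" using m0 by (simp add: field_simps power2_eq_square)
  finally show ?thesis .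
qed

definition hk :: "(nat \<times> nat \<Rightarrow> bool) \<Rightarrow> nat \<Rightarrow> real" where
  "hk g k = ((\<Sum>j\<in>Aset m k. \<beta> * qq g j) / m) * ((\<Sum>j\<in>Bset m k. \<beta> * qq g j) / m)"

lemma E_Zk: "k < r \<Longrightarrow> measure_pmf.expectation (OutP g) (Zk k) = hk g k"
proof -
  assume k: "k < r"
  have "measure_pmf.expectation (OutP g) (\<lambda>x. av (Aset m k) x * av (Bset m k) x) =
     measure_pmf.expectation (OutP g) (av (Aset m k)) * measure_pmf.expectation (OutP g) (av (Bset m k))"
  proof (rule E_indep[where U="Aset m k" and V="Bset m k" and Bx=1 and By=1])
    show "Aset m k \<subseteq> {..<RR}" by (rule AB_sub(1)[OF k])
    show "Bset m k \<subseteq> {..<RR}" by (rule AB_sub(2)[OF k])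
    show "Aset m k \<inter> Bset m k = {}" by (rule AB_disj)
    show "av (Aset m k) x = av (Aset m k) x'" if "\<And>j. j \<in> Aset m k \<Longrightarrow> x (s j) = x' (s j)" for x x'
      using that by (rule dep_av)
    show "av (Bset m k) x = av (Bset m k) x'" if "\<And>j. j \<in> Bset m k \<Longrightarrow> x (s j) = x' (s j)" for x x'
      using that by (rule dep_av)
    show "\<bar>av (Aset m k) y\<bar> \<le> 1" for y by (rule abs_av) simp
    show "\<bar>av (Bset m k) y\<bar> \<le> 1" for y by (rule abs_av) simp
  qed
  moreover have "Zk k = (\<lambda>x. av (Aset m k) x * av (Bset m k) x)" by (simp add: Zk_def fun_eq_iff)
  ultimately show ?thesis using E_av AB_sub[OF k] by (simp add: hk_def)
qed

lemma dep_av2: "(\<And>j. j \<in> J \<Longrightarrow> x (s j) = x' (s j)) \<Longrightarrow> av J x ^ 2 = av J x' ^ 2"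
proof -
  assume "\<And>j. j \<in> J \<Longrightarrow> x (s j) = x' (s j)"
  then have "av J x = av J x'" by (rule dep_av)
  then show ?thesis by simp
qed

lemma dep_Zk: "(\<And>j. j \<in> Aset m k \<union> Bset m k \<Longrightarrow> x (s j) = x' (s j)) \<Longrightarrow> Zk k x = Zk k x'"
proof -
  assume h: "\<And>j. j \<in> Aset m k \<union> Bset m k \<Longrightarrow> x (s j) = x' (s j)"
  have "av (Aset m k) x = av (Aset m k) x'" by (rule dep_av) (use h in auto)
  moreover have "av (Bset m k) x = av (Bset m k) x'" by (rule dep_av) (use h in auto)
  ultimately show ?thesis by (simp add: Zk_def)
qed

lemma E_Zk2: "k < r \<Longrightarrow> measure_pmf.expectation (OutP g) (\<lambda>x. Zk k x * Zk k x) \<le> (1/m + \<beta>^2)^2"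
proof -
  assume k: "k < r"
  have ab: "\<bar>av J x ^ 2\<bar> \<le> 1" if "card J = m" for J x
  proof -
    have "av J x ^ 2 \<le> 1" using abs_av[OF that, of x] by (simp add: abs_square_le_1)
    then show ?thesis by simp
  qed
  have "measure_pmf.expectation (OutP g) (\<lambda>x. av (Aset m k) x ^ 2 * av (Bset m k) x ^ 2) =
     measure_pmf.expectation (OutP g) (\<lambda>x. av (Aset m k) x ^ 2) * measure_pmf.expectation (OutP g) (\<lambda>x. av (Bset m k) x ^ 2)"
  proof (rule E_indep[where U="Aset m k" and V="Bset m k" and Bx=1 and By=1])
    show "Aset m k \<subseteq> {..<RR}" by (rule AB_sub(1)[OF k])
    show "Bset m k \<subseteq> {..<RR}" by (rule AB_sub(2)[OF k])
    show "Aset m k \<inter> Bset m k = {}" by (rule AB_disj)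
    show "av (Aset m k) x ^ 2 = av (Aset m k) x' ^ 2" if "\<And>j. j \<in> Aset m k \<Longrightarrow> x (s j) = x' (s j)" for x x'
      using that by (rule dep_av2)
    show "av (Bset m k) x ^ 2 = av (Bset m k) x' ^ 2" if "\<And>j. j \<in> Bset m k \<Longrightarrow> x (s j) = x' (s j)" for x x'
      using that by (rule dep_av2)
    show "\<bar>av (Aset m k) y ^ 2\<bar> \<le> 1" for y by (rule ab) simp
    show "\<bar>av (Bset m k) y ^ 2\<bar> \<le> 1" for y by (rule ab) simp
  qed
  also have "\<dots> \<le> (1/m + \<beta>^2) * (1/m + \<beta>^2)"
    using E_av_sq[OF AB_sub(1)[OF k], of g] E_av_sq[OF AB_sub(2)[OF k], of g]
    by (intro mult_mono) (auto intro!: Bochner_Integration.integral_nonneg)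
  finally show ?thesis by (simp add: Zk_def power2_eq_square algebra_simps)
qed

lemma E_ZZ: "k < r \<Longrightarrow> l < r \<Longrightarrow> k \<noteq> l \<Longrightarrow>
   measure_pmf.expectation (OutP g) (\<lambda>x. Zk k x * Zk l x) = hk g k * hk g l"
proof -
  assume k: "k < r" and l: "l < r" and kl: "k \<noteq> l"
  have "measure_pmf.expectation (OutP g) (\<lambda>x. Zk k x * Zk l x) =
     measure_pmf.expectation (OutP g) (Zk k) * measure_pmf.expectation (OutP g) (Zk l)"
  proof (rule E_indep[where U="Aset m k \<union> Bset m k" and V="Aset m l \<union> Bset m l" and Bx=1 and By=1])
    show "Aset m k \<union> Bset m k \<subseteq> {..<RR}" using AB_sub[OF k] by blast
    show "Aset m l \<union> Bset m l \<subseteq> {..<RR}" using AB_sub[OF l] by blast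
    show "(Aset m k \<union> Bset m k) \<inter> (Aset m l \<union> Bset m l) = {}" by (rule AB_disj2[OF kl])
    show "Zk k x = Zk k x'" if "\<And>j. j \<in> Aset m k \<union> Bset m k \<Longrightarrow> x (s j) = x' (s j)" for x x'
      using that by (rule dep_Zk)
    show "Zk l x = Zk l x'" if "\<And>j. j \<in> Aset m l \<union> Bset m l \<Longrightarrow> x (s j) = x' (s j)" for x x'
      using that by (rule dep_Zk)
    show "\<bar>Zk k y\<bar> \<le> 1" for y by (rule abs_Zk)
    show "\<bar>Zk l y\<bar> \<le> 1" for y by (rule abs_Zk)
  qed
  then show ?thesis using E_Zk k l by simp
qed

abbreviation "II \<equiv> {..<r} \<times> {..<n}"

definition Jnt :: "(nat \<Rightarrow> nat) pmf" where "Jnt = bind_pmf (CP II) OutP"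

definition Stat :: "(nat \<Rightarrow> nat) \<Rightarrow> real" where "Stat x = (\<Sum>k<r. Zk k x)"

lemma abs_Stat: "\<bar>Stat x\<bar> \<le> r"
proof -
  have "\<bar>Stat x\<bar> \<le> (\<Sum>k<r. \<bar>Zk k x\<bar>)" unfolding Stat_def by (rule sum_abs)
  also have "\<dots> \<le> (\<Sum>k<r. 1)" by (intro sum_mono abs_Zk)
  finally show ?thesis by simp
qed

lemma E_Jnt:
  fixes F :: "(nat \<Rightarrow> nat) \<Rightarrow> real"
  assumes "\<And>x. \<bar>F x\<bar> \<le> B"
  shows "measure_pmf.expectation Jnt F = measure_pmf.expectation (CP II) (\<lambda>g. measure_pmf.expectation (OutP g) F)"
  unfolding Jnt_def by (rule exp_bind[OF assms])

lemma fin_II: "finite II" by simp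

lemma hk_dep:
  assumes k: "k < r" and h: "\<And>u. u < n \<Longrightarrow> g (k, u) = g' (k, u)"
  shows "hk g k = hk g' k"
proof -
  have "qq g j = qq g' j" if "j \<in> Aset m k \<union> Bset m k" for j
    unfolding qq_def qv_def AB_div[OF that] using h by (intro arg_cong[where f=clip] arg_cong[where f="\<lambda>z. z / D"] sum.cong) auto
  then show ?thesis unfolding hk_def by (metis (no_types, lifting) UnCI sum.cong)
qed

lemma abs_hk: "\<bar>hk g k\<bar> \<le> 1"
proof -
  have a: "\<bar>(\<Sum>j\<in>J. \<beta> * qq g j) / m\<bar> \<le> 1" if "card J = m" for J
  proof -
    have "\<bar>\<Sum>j\<in>J. \<beta> * qq g j\<bar> \<le> (\<Sum>j\<in>J. \<bar>\<beta> * qq g j\<bar>)" by (rule sum_abs)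
    also have "\<dots> \<le> (\<Sum>j\<in>J. 1)"
    proof (intro sum_mono)
      fix j
      have "\<bar>\<beta> * qq g j\<bar> = \<beta> * \<bar>qq g j\<bar>" using b0 by (simp add: abs_mult)
      also have "\<dots> \<le> 1 * 1" using b0 b1 abs_qq[of g j] by (intro mult_mono) auto
      finally show "\<bar>\<beta> * qq g j\<bar> \<le> 1" by simp
    qed
    also have "\<dots> = real m" using that by simp
    finally have h: "\<bar>\<Sum>j\<in>J. \<beta> * qq g j\<bar> \<le> real m" .
    have "\<bar>\<Sum>j\<in>J. \<beta> * qq g j\<bar> / real m \<le> real m / real m" by (rule divide_right_mono[OF h]) simp
    also have "\<dots> = 1" using m0 by simp
    finally show ?thesis unfolding abs_divide by simp
  qed
  show ?thesis unfolding hk_def abs_mult using a[of "Aset m k"] a[of "Bset m k"]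
    by (intro mult_le_one) auto
qed

lemma int_CPII[simp]: "integrable (measure_pmf (CP II)) (f :: _ \<Rightarrow> real)"
  by (rule int_CP[OF fin_II])

lemma E_hk_hk:
  assumes "k < r" "l < r" "k \<noteq> l"
  shows "measure_pmf.expectation (CP II) (\<lambda>g. hk g k * hk g l) =
         measure_pmf.expectation (CP II) (\<lambda>g. hk g k) * measure_pmf.expectation (CP II) (\<lambda>g. hk g l)"
proof (rule indep_blocks[where U="{k} \<times> {..<n}" and V="{l} \<times> {..<n}" and Bx=1 and By=1])
  show "finite II" by simp
  show "{k} \<times> {..<n} \<subseteq> II" using assms by auto
  show "{k} \<times> {..<n} \<inter> {l} \<times> {..<n} = {}" using assms by auto
  show "hk x k = hk x' k" if "\<And>i. i \<in> {k} \<times> {..<n} \<Longrightarrow> x i = x' i" for x x'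
    by (rule hk_dep[OF assms(1)]) (use that in auto)
  show "hk x l = hk x' l" if "\<And>i. i \<in> {l} \<times> {..<n} \<Longrightarrow> x i = x' i" for x x'
    by (rule hk_dep[OF assms(2)]) (use that in auto)
  show "\<bar>hk y k\<bar> \<le> 1" for y by (rule abs_hk)
  show "\<bar>hk y l\<bar> \<le> 1" for y by (rule abs_hk)
qed

lemma M1: "measure_pmf.expectation Jnt Stat = (\<Sum>k<r. measure_pmf.expectation (CP II) (\<lambda>g. hk g k))"
proof -
  have "measure_pmf.expectation Jnt Stat = measure_pmf.expectation (CP II) (\<lambda>g. measure_pmf.expectation (OutP g) Stat)"
    by (rule E_Jnt[OF abs_Stat])
  also have "\<dots> = measure_pmf.expectation (CP II) (\<lambda>g. \<Sum>k<r. hk g k)"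
    unfolding Stat_def by (simp add: E_Zk)
  also have "\<dots> = (\<Sum>k<r. measure_pmf.expectation (CP II) (\<lambda>g. hk g k))" by simp
  finally show ?thesis .
qed

lemma M2: "measure_pmf.expectation Jnt (\<lambda>x. Stat x ^ 2) \<le>
   r * (1/m + \<beta>^2)^2 + (\<Sum>k<r. measure_pmf.expectation (CP II) (\<lambda>g. hk g k))^2"
proof -
  define e where "e k = measure_pmf.expectation (CP II) (\<lambda>g. hk g k)" for k
  define c where "c = (1/m + \<beta>^2)^2"
  define \<Phi> where "\<Phi> = (\<lambda>g. r * c + (\<Sum>k<r. \<Sum>l\<in>{..<r} - {k}. hk g k * hk g l))"
  have bS2: "\<bar>Stat x ^ 2\<bar> \<le> real r ^ 2" for x
    using abs_Stat[of x] by (simp add: abs_le_square_iff) (metis abs_of_nat of_nat_0_le_iff abs_le_square_iff abs_Stat)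
  have step: "measure_pmf.expectation (OutP g) (\<lambda>x. Stat x ^ 2) \<le> \<Phi> g" for g
  proof -
    have "(\<lambda>x. Stat x ^ 2) = (\<lambda>x. \<Sum>k<r. \<Sum>l<r. Zk k x * Zk l x)"
      unfolding Stat_def by (simp add: power2_eq_square sum_product)
    then have "measure_pmf.expectation (OutP g) (\<lambda>x. Stat x ^ 2) =
       (\<Sum>k<r. \<Sum>l<r. measure_pmf.expectation (OutP g) (\<lambda>x. Zk k x * Zk l x))" by simp
    also have "\<dots> = (\<Sum>k<r. measure_pmf.expectation (OutP g) (\<lambda>x. Zk k x * Zk k x) +
         (\<Sum>l\<in>{..<r} - {k}. measure_pmf.expectation (OutP g) (\<lambda>x. Zk k x * Zk l x)))"
      by (intro sum.cong refl sum.remove) auto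
    also have "\<dots> = (\<Sum>k<r. measure_pmf.expectation (OutP g) (\<lambda>x. Zk k x * Zk k x) +
         (\<Sum>l\<in>{..<r} - {k}. hk g k * hk g l))"
      by (intro sum.cong refl arg_cong2[where f="(+)"]) (auto simp: E_ZZ)
    also have "\<dots> \<le> (\<Sum>k<r. c + (\<Sum>l\<in>{..<r} - {k}. hk g k * hk g l))"
      by (intro sum_mono add_right_mono) (auto simp: c_def E_Zk2)
    also have "\<dots> = \<Phi> g" by (simp add: \<Phi>_def sum.distrib)
    finally show ?thesis .
  qed
  have "measure_pmf.expectation Jnt (\<lambda>x. Stat x ^ 2) = measure_pmf.expectation (CP II) (\<lambda>g. measure_pmf.expectation (OutP g) (\<lambda>x. Stat x ^ 2))"
    by (rule E_Jnt[OF bS2])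
  also have "\<dots> \<le> measure_pmf.expectation (CP II) \<Phi>"
    by (intro integral_mono step) auto
  also have "\<dots> = r * c + (\<Sum>k<r. \<Sum>l\<in>{..<r} - {k}. measure_pmf.expectation (CP II) (\<lambda>g. hk g k * hk g l))"
    by (simp add: \<Phi>_def)
  also have "\<dots> = r * c + (\<Sum>k<r. \<Sum>l\<in>{..<r} - {k}. e k * e l)"
    by (intro arg_cong2[where f="(+)"] refl sum.cong) (auto simp: e_def E_hk_hk)
  also have "(\<Sum>k<r. \<Sum>l\<in>{..<r} - {k}. e k * e l) = (\<Sum>k<r. e k)^2 - (\<Sum>k<r. e k * e k)"
  proof -
    have "(\<Sum>k<r. e k)^2 = (\<Sum>k<r. \<Sum>l<r. e k * e l)" by (simp add: power2_eq_square sum_product)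
    also have "\<dots> = (\<Sum>k<r. e k * e k + (\<Sum>l\<in>{..<r} - {k}. e k * e l))"
      by (intro sum.cong refl sum.remove) auto
    also have "\<dots> = (\<Sum>k<r. e k * e k) + (\<Sum>k<r. \<Sum>l\<in>{..<r} - {k}. e k * e l)" by (rule sum.distrib)
    finally show ?thesis by simp
  qed
  also have "r * c + ((\<Sum>k<r. e k)^2 - (\<Sum>k<r. e k * e k)) \<le> r * c + (\<Sum>k<r. e k)^2"
  proof -
    have "0 \<le> (\<Sum>k<r. e k * e k)" by (intro sum_nonneg) simp
    then show ?thesis by simp
  qed
  finally show ?thesis by (simp add: c_def e_def)
qed
end


lemma dsum: fixes f :: "nat \<Rightarrow> real" and \<beta> c :: real
  shows "((\<Sum>a\<in>A. \<beta> * f a) / c) * ((\<Sum>b\<in>B. \<beta> * f b) / c) = \<beta>^2 / c^2 * (\<Sum>a\<in>A. \<Sum>b\<in>B. f a * f b)"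
proof -
  have "(\<Sum>a\<in>A. \<Sum>b\<in>B. f a * f b) = (\<Sum>a\<in>A. f a) * (\<Sum>b\<in>B. f b)" by (rule sum_product[symmetric])
  moreover have "(\<Sum>a\<in>A. \<beta> * f a) = \<beta> * (\<Sum>a\<in>A. f a)" by (rule sum_distrib_left[symmetric])
  moreover have "(\<Sum>b\<in>B. \<beta> * f b) = \<beta> * (\<Sum>b\<in>B. f b)" by (rule sum_distrib_left[symmetric])
  ultimately show ?thesis by (simp add: power2_eq_square)
qed

context core begin

lemma qq_W: "k < r \<Longrightarrow> j \<in> Aset m k \<union> Bset m k \<Longrightarrow>
   qq g j = clip ((\<Sum>w\<in>{k} \<times> (nbhd G (s j) \<inter> {..<n}). sg (g w)) / D)"
proof -
  assume k: "k < r" and j: "j \<in> Aset m k \<union> Bset m k"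
  have "(\<Sum>w\<in>{k} \<times> (nbhd G (s j) \<inter> {..<n}). sg (g w)) = (\<Sum>u\<in>nbhd G (s j) \<inter> {..<n}. sg (g (k, u)))"
  proof -
    have "{k} \<times> (nbhd G (s j) \<inter> {..<n}) = (\<lambda>u. (k, u)) ` (nbhd G (s j) \<inter> {..<n})" by auto
    then show ?thesis by (simp add: sum.reindex inj_on_def)
  qed
  then show ?thesis unfolding qq_def qv_def AB_div[OF j] by simp
qed

lemma E_qq_zero: "k < r \<Longrightarrow> j \<in> Aset m k \<union> Bset m k \<Longrightarrow> measure_pmf.expectation (CP II) (\<lambda>g. qq g j) = 0"
proof -
  assume k: "k < r" and j: "j \<in> Aset m k \<union> Bset m k"
  have "measure_pmf.expectation (CP II) (\<lambda>g. qq g j) =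
        measure_pmf.expectation (CP II) (\<lambda>g. (\<lambda>z. clip (z / D)) (\<Sum>w\<in>{k} \<times> (nbhd G (s j) \<inter> {..<n}). sg (g w)))"
    by (simp add: qq_W[OF k j])
  also have "\<dots> = 0"
  proof (rule odd_zero)
    show "finite II" by simp
    show "{k} \<times> (nbhd G (s j) \<inter> {..<n}) \<subseteq> II" using k by auto
    show "clip (- z / D) = - clip (z / D)" for z using clip_odd[of "z / D"] by simp
  qed
  finally show ?thesis .
qed

lemma E_qq_qq:
  assumes k: "k < r" and a: "a \<in> Aset m k" and b: "b \<in> Bset m k"
  shows "\<bar>measure_pmf.expectation (CP II) (\<lambda>g. qq g a * qq g b)\<bar> \<le>
         (if nbhd G (s a) \<inter> nbhd G (s b) = {} then 0 else 1)"
proof (cases "nbhd G (s a) \<inter> nbhd G (s b) = {}")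
  case True
  have aa: "a \<in> Aset m k \<union> Bset m k" and bb: "b \<in> Aset m k \<union> Bset m k" using a b by auto
  have "measure_pmf.expectation (CP II) (\<lambda>g. qq g a * qq g b) =
     measure_pmf.expectation (CP II) (\<lambda>g. qq g a) * measure_pmf.expectation (CP II) (\<lambda>g. qq g b)"
  proof (rule indep_blocks[where U="{k} \<times> (nbhd G (s a) \<inter> {..<n})" and V="{k} \<times> (nbhd G (s b) \<inter> {..<n})" and Bx=1 and By=1])
    show "finite II" by simp
    show "{k} \<times> (nbhd G (s a) \<inter> {..<n}) \<subseteq> II" using k by auto
    show "{k} \<times> (nbhd G (s a) \<inter> {..<n}) \<inter> {k} \<times> (nbhd G (s b) \<inter> {..<n}) = {}" using True by blast
    show "qq x a = qq x' a" if h: "\<And>i. i \<in> {k} \<times> (nbhd G (s a) \<inter> {..<n}) \<Longrightarrow> x i = x' i" for x x'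
    proof -
      have "(\<Sum>w\<in>{k} \<times> (nbhd G (s a) \<inter> {..<n}). sg (x w)) = (\<Sum>w\<in>{k} \<times> (nbhd G (s a) \<inter> {..<n}). sg (x' w))"
        by (rule sum.cong) (simp_all add: h)
      then show ?thesis unfolding qq_W[OF k aa] by simp
    qed
    show "qq x b = qq x' b" if h: "\<And>i. i \<in> {k} \<times> (nbhd G (s b) \<inter> {..<n}) \<Longrightarrow> x i = x' i" for x x'
    proof -
      have "(\<Sum>w\<in>{k} \<times> (nbhd G (s b) \<inter> {..<n}). sg (x w)) = (\<Sum>w\<in>{k} \<times> (nbhd G (s b) \<inter> {..<n}). sg (x' w))"
        by (rule sum.cong) (simp_all add: h)
      then show ?thesis unfolding qq_W[OF k bb] by simp
    qed
    show "\<bar>qq y a\<bar> \<le> 1" for y by (rule abs_qq)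
    show "\<bar>qq y b\<bar> \<le> 1" for y by (rule abs_qq)
  qed
  then have "measure_pmf.expectation (CP II) (\<lambda>g. qq g a * qq g b) = 0" using E_qq_zero[OF k aa] by simp
  then show ?thesis using True by simp
next
  case False
  have "\<bar>measure_pmf.expectation (CP II) (\<lambda>g. qq g a * qq g b)\<bar> \<le> 1"
  proof -
    have "\<bar>measure_pmf.expectation (CP II) (\<lambda>g. qq g a * qq g b)\<bar> \<le> measure_pmf.expectation (CP II) (\<lambda>g. \<bar>qq g a * qq g b\<bar>)"
      by (rule integral_abs_bound)
    also have "\<dots> \<le> measure_pmf.expectation (CP II) (\<lambda>g. 1)"
    proof (rule integral_mono)
      show "\<bar>qq g a * qq g b\<bar> \<le> 1" for g
        unfolding abs_mult by (rule mult_le_one[OF abs_qq abs_ge_zero abs_qq])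
    qed simp_all
    finally show ?thesis by simp
  qed
  then show ?thesis using False by simp
qed

definition ovl :: "nat \<Rightarrow> nat \<Rightarrow> real" where
  "ovl x y = (if nbhd G x \<inter> nbhd G y = {} then 0 else 1)"

lemma e_reg: "k < r \<Longrightarrow> \<bar>measure_pmf.expectation (CP II) (\<lambda>g. hk g k)\<bar> \<le>
   \<beta>^2 / (real m)^2 * (\<Sum>a\<in>Aset m k. \<Sum>b\<in>Bset m k. ovl (s a) (s b))"
proof -
  assume k: "k < r"
  have "(\<lambda>g. hk g k) = (\<lambda>g. \<beta>^2 / (real m)^2 * (\<Sum>a\<in>Aset m k. \<Sum>b\<in>Bset m k. qq g a * qq g b))"
    by (rule ext) (unfold hk_def, rule dsum)
  then have EQ: "measure_pmf.expectation (CP II) (\<lambda>g. hk g k) =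
      \<beta>^2 / (real m)^2 * (\<Sum>a\<in>Aset m k. \<Sum>b\<in>Bset m k. measure_pmf.expectation (CP II) (\<lambda>g. qq g a * qq g b))"
    by simp
  have "\<bar>\<beta>^2 / (real m)^2 * (\<Sum>a\<in>Aset m k. \<Sum>b\<in>Bset m k. measure_pmf.expectation (CP II) (\<lambda>g. qq g a * qq g b))\<bar> \<le> \<beta>^2 / (real m)^2 * (\<Sum>a\<in>Aset m k. \<Sum>b\<in>Bset m k. \<bar>measure_pmf.expectation (CP II) (\<lambda>g. qq g a * qq g b)\<bar>)"
  proof -
    have "\<bar>\<Sum>a\<in>Aset m k. \<Sum>b\<in>Bset m k. measure_pmf.expectation (CP II) (\<lambda>g. qq g a * qq g b)\<bar> \<le>
       (\<Sum>a\<in>Aset m k. \<Sum>b\<in>Bset m k. \<bar>measure_pmf.expectation (CP II) (\<lambda>g. qq g a * qq g b)\<bar>)"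
      by (rule order_trans[OF sum_abs]) (intro sum_mono sum_abs)
    then have A1: "\<beta>^2 / (real m)^2 * \<bar>\<Sum>a\<in>Aset m k. \<Sum>b\<in>Bset m k. measure_pmf.expectation (CP II) (\<lambda>g. qq g a * qq g b)\<bar> \<le>
       \<beta>^2 / (real m)^2 * (\<Sum>a\<in>Aset m k. \<Sum>b\<in>Bset m k. \<bar>measure_pmf.expectation (CP II) (\<lambda>g. qq g a * qq g b)\<bar>)"
      by (rule mult_left_mono) simp
    have B1: "\<bar>\<beta>^2 / (real m)^2 * (\<Sum>a\<in>Aset m k. \<Sum>b\<in>Bset m k. measure_pmf.expectation (CP II) (\<lambda>g. qq g a * qq g b))\<bar> =
        \<beta>^2 / (real m)^2 * \<bar>\<Sum>a\<in>Aset m k. \<Sum>b\<in>Bset m k. measure_pmf.expectation (CP II) (\<lambda>g. qq g a * qq g b)\<bar>"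
      by (simp add: abs_mult)
    show ?thesis unfolding B1 by (rule A1)
  qed
  also have "\<dots> \<le> \<beta>^2 / (real m)^2 * (\<Sum>a\<in>Aset m k. \<Sum>b\<in>Bset m k. ovl (s a) (s b))"
  proof (intro mult_left_mono sum_mono)
    fix a b assume ab: "a \<in> Aset m k" "b \<in> Bset m k"
    show "\<bar>measure_pmf.expectation (CP II) (\<lambda>g. qq g a * qq g b)\<bar> \<le> ovl (s a) (s b)"
      using E_qq_qq[OF k ab] unfolding ovl_def by simp
  qed simp
  finally show ?thesis unfolding EQ .
qed

end


lemma sq_le: fixes a b :: real assumes "\<bar>a\<bar> \<le> b" shows "a^2 \<le> b^2"
proof -
  have "\<bar>a\<bar>^2 \<le> b^2" by (rule power_mono[OF assms abs_ge_zero])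
  then show ?thesis by simp
qed

lemma prob_as_exp: "measure_pmf.prob p A = measure_pmf.expectation p (\<lambda>x. indicator A x :: real)"
  by simp

lemma cheb_low:
  fixes f :: "'a \<Rightarrow> real"
  assumes bf: "\<And>x. \<bar>f x\<bar> \<le> B" and m1: "measure_pmf.expectation p f = \<mu>"
    and m2: "measure_pmf.expectation p (\<lambda>x. f x ^ 2) \<le> V + \<mu>^2" and t: "\<tau> < \<mu>"
  shows "measure_pmf.prob p {x. f x < \<tau>} \<le> V / (\<mu> - \<tau>)^2"
proof -
  have int: "integrable (measure_pmf p) (\<lambda>x. (f x - \<mu>)^2)"
  proof (rule int_bounded)
    show "\<bar>(f x - \<mu>)^2\<bar> \<le> (B + \<bar>\<mu>\<bar>)^2" for x
    proof -
      have "\<bar>f x - \<mu>\<bar> \<le> B + \<bar>\<mu>\<bar>" using bf[of x] by linarith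
      then show ?thesis using sq_le by simp
    qed
  qed
  have intf: "integrable (measure_pmf p) f" by (rule int_bounded[OF bf])
  have intf2: "integrable (measure_pmf p) (\<lambda>x. f x ^ 2)"
    by (rule int_bounded[where B="B^2"]) (use sq_le[OF bf] in simp)
  have d: "0 < (\<mu> - \<tau>)^2" using t by simp
  have "measure_pmf.prob p {x. f x < \<tau>} = measure_pmf.expectation p (\<lambda>x. indicator {x. f x < \<tau>} x :: real)" by simp
  also have "\<dots> \<le> measure_pmf.expectation p (\<lambda>x. (f x - \<mu>)^2 / (\<mu> - \<tau>)^2)"
  proof (rule integral_mono)
    show "integrable (measure_pmf p) (\<lambda>x. indicator {x. f x < \<tau>} x :: real)"
      by (rule int_bounded[where B=1]) (simp add: indicator_def)
    show "integrable (measure_pmf p) (\<lambda>x. (f x - \<mu>)^2 / (\<mu> - \<tau>)^2)" using int by simp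
    fix x
    show "indicator {x. f x < \<tau>} x \<le> (f x - \<mu>)^2 / (\<mu> - \<tau>)^2"
    proof (cases "f x < \<tau>")
      case True
      then have "\<mu> - \<tau> \<le> \<mu> - f x" "0 \<le> \<mu> - \<tau>" using t by auto
      then have "(\<mu> - \<tau>)^2 \<le> (\<mu> - f x)^2" by (rule power_mono)
      also have "\<dots> = (f x - \<mu>)^2" by (simp add: power2_commute)
      finally show ?thesis using True d by simp
    next
      case False
      then show ?thesis using d by simp
    qed
  qed
  also have "\<dots> = measure_pmf.expectation p (\<lambda>x. (f x - \<mu>)^2) / (\<mu> - \<tau>)^2" by simp
  also have "measure_pmf.expectation p (\<lambda>x. (f x - \<mu>)^2) = measure_pmf.expectation p (\<lambda>x. f x ^ 2) - 2 * \<mu> * measure_pmf.expectation p f + \<mu>^2"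
  proof -
    have "(\<lambda>x. (f x - \<mu>)^2) = (\<lambda>x. f x ^ 2 - 2 * \<mu> * f x + \<mu>^2)" by (simp add: power2_diff algebra_simps)
    then show ?thesis using intf intf2 by simp
  qed
  also have "\<dots> \<le> V" using m1 m2 by (simp add: power2_eq_square)
  finally show ?thesis using d by (simp add: divide_right_mono)
qed

lemma markov2:
  fixes f :: "'a \<Rightarrow> real"
  assumes bf: "\<And>x. \<bar>f x\<bar> \<le> B" and t: "0 < \<tau>"
  shows "measure_pmf.prob p {x. \<tau> \<le> f x} \<le> measure_pmf.expectation p (\<lambda>x. f x ^ 2) / \<tau>^2"
proof -
  have intf2: "integrable (measure_pmf p) (\<lambda>x. f x ^ 2)"
    by (rule int_bounded[where B="B^2"]) (use sq_le[OF bf] in simp)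
  have "measure_pmf.prob p {x. \<tau> \<le> f x} = measure_pmf.expectation p (\<lambda>x. indicator {x. \<tau> \<le> f x} x :: real)" by simp
  also have "\<dots> \<le> measure_pmf.expectation p (\<lambda>x. f x ^ 2 / \<tau>^2)"
  proof (rule integral_mono)
    show "integrable (measure_pmf p) (\<lambda>x. indicator {x. \<tau> \<le> f x} x :: real)"
      by (rule int_bounded[where B=1]) (simp add: indicator_def)
    show "integrable (measure_pmf p) (\<lambda>x. f x ^ 2 / \<tau>^2)" using intf2 by simp
    fix x
    show "indicator {x. \<tau> \<le> f x} x \<le> f x ^ 2 / \<tau>^2"
    proof (cases "\<tau> \<le> f x")
      case True
      then have "\<tau>^2 \<le> f x ^ 2" using t by (intro power_mono) auto
      then show ?thesis using True t by simp
    next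
      case False
      then show ?thesis by simp
    qed
  qed
  also have "\<dots> = measure_pmf.expectation p (\<lambda>x. f x ^ 2) / \<tau>^2" by simp
  finally show ?thesis .
qed


lemma nbhd_star:
  assumes "T \<subseteq> {..<n}" "i < n" "i \<notin> T"
  shows "nbhd (starpartite n T) i = T"
proof
  show "nbhd (starpartite n T) i \<subseteq> T"
  proof
    fix j assume "j \<in> nbhd (starpartite n T) i"
    then obtain a b where ab: "{i, j} = {a, b}" "a \<in> T" "b < n" "a \<noteq> b"
      by (auto simp: nbhd_def starpartite_def)
    then have "a = i \<or> a = j" by (metis doubleton_eq_iff)
    then show "j \<in> T" using ab assms(3) by auto
  qed
  show "T \<subseteq> nbhd (starpartite n T) i"
  proof
    fix j assume j: "j \<in> T"
    have "{i, j} = {j, i}" by auto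
    moreover have "j \<noteq> i" using j assms(3) by auto
    ultimately have "{i, j} \<in> starpartite n T" unfolding starpartite_def using j assms(2) by blast
    then show "j \<in> nbhd (starpartite n T) i" by (simp add: nbhd_def)
  qed
qed

context core begin


lemma hk_star:
  assumes T: "T \<subseteq> {..<n}" and GT: "G = starpartite n T" and avoid: "\<forall>j<RR. s j \<notin> T" and k: "k < r"
  shows "hk g k = \<beta>^2 * (clip ((\<Sum>w\<in>{k} \<times> T. sg (g w)) / D))^2"
proof -
  let ?Q = "clip ((\<Sum>w\<in>{k} \<times> T. sg (g w)) / D)"
  have q: "qq g j = ?Q" if "j \<in> Aset m k \<union> Bset m k" for j
  proof -
    have j: "j < RR" using AB_lt[OF k that] .
    have "nbhd G (s j) = T" unfolding GT by (rule nbhd_star[OF T srange[OF j]]) (use avoid j in auto)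
    moreover have "T \<inter> {..<n} = T" using T by auto
    ultimately show ?thesis using qq_W[OF k that] by simp
  qed
  have "(\<Sum>j\<in>Aset m k. \<beta> * qq g j) = m * (\<beta> * ?Q)" using q by simp
  moreover have "(\<Sum>j\<in>Bset m k. \<beta> * qq g j) = m * (\<beta> * ?Q)" using q by simp
  ultimately show ?thesis using m0 by (simp add: hk_def power2_eq_square)
qed

lemma E_Q_star:
  assumes T: "T \<subseteq> {..<n}" and k: "k < r" and tD: "real (card T) = D^2"
  shows "measure_pmf.expectation (CP II) (\<lambda>g. (clip ((\<Sum>w\<in>{k} \<times> T. sg (g w)) / D))^2) \<ge> 1/4"
proof -
  let ?S = "\<lambda>g. (\<Sum>w\<in>{k} \<times> T. sg (g w))"
  have W: "{k} \<times> T \<subseteq> II" using T k by auto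
  have cW: "card ({k} \<times> T) = card T" by (simp add: card_cartesian_product)
  have mo: "measure_pmf.expectation (CP II) (\<lambda>g. ?S g ^ 2) = D^2"
           "measure_pmf.expectation (CP II) (\<lambda>g. ?S g ^ 4) = 3 * (D^2)^2 - 2 * D^2"
    using rad_moments[OF fin_II W] cW tD by auto
  have "measure_pmf.expectation (CP II) (\<lambda>g. (?S g / D)^2 - (?S g / D)^4 / 4) \<le>
        measure_pmf.expectation (CP II) (\<lambda>g. (clip (?S g / D))^2)"
    by (intro integral_mono clip_sq_lower) simp_all
  moreover have "measure_pmf.expectation (CP II) (\<lambda>g. (?S g / D)^2 - (?S g / D)^4 / 4) =
       measure_pmf.expectation (CP II) (\<lambda>g. ?S g ^ 2) / D^2 - measure_pmf.expectation (CP II) (\<lambda>g. ?S g ^ 4) / (4 * D^4)"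
    by (simp add: power_divide)
  moreover have "\<dots> = 1/4 + 1 / (2 * D^2)"
    unfolding mo using D0 by (simp add: field_simps power2_eq_square power4_eq_xxxx)
  moreover have "1 / (2 * D^2) \<ge> 0" by simp
  ultimately show ?thesis by linarith
qed

lemma star_bound:
  assumes T: "T \<subseteq> {..<n}" and GT: "G = starpartite n T" and avoid: "\<forall>j<RR. s j \<notin> T"
    and tD: "real (card T) = D^2" and mb: "1/m \<le> \<beta>^2" and r0: "r > 0" and bp: "\<beta> > 0"
  shows "measure_pmf.prob Jnt {x. Stat x < r * \<beta>^2 / 8} \<le> 256 / r"
proof -
  define e where "e k = measure_pmf.expectation (CP II) (\<lambda>g. hk g k)" for k
  define \<mu> where "\<mu> = (\<Sum>k<r. e k)"
  have ek: "e k \<ge> \<beta>^2 / 4" if "k < r" for k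
  proof -
    have "e k = \<beta>^2 * measure_pmf.expectation (CP II) (\<lambda>g. (clip ((\<Sum>w\<in>{k} \<times> T. sg (g w)) / D))^2)"
      unfolding e_def using hk_star[OF T GT avoid that] by simp
    moreover have "\<beta>^2 * measure_pmf.expectation (CP II) (\<lambda>g. (clip ((\<Sum>w\<in>{k} \<times> T. sg (g w)) / D))^2) \<ge> \<beta>^2 * (1/4)"
      by (intro mult_left_mono E_Q_star[OF T that tD]) simp
    ultimately show ?thesis by simp
  qed
  have mu: "\<mu> \<ge> r * \<beta>^2 / 4"
  proof -
    have "(\<Sum>k<r. \<beta>^2 / 4) \<le> \<mu>" unfolding \<mu>_def by (intro sum_mono ek) simp
    then show ?thesis by simp
  qed
  have V: "r * (1/m + \<beta>^2)^2 \<le> r * (4 * \<beta>^4)"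
  proof -
    have "1/m + \<beta>^2 \<le> 2 * \<beta>^2" using mb by simp
    then have "(1/m + \<beta>^2)^2 \<le> (2 * \<beta>^2)^2" by (intro power_mono) auto
    then show ?thesis by (intro mult_left_mono) (auto simp: power_mult_distrib)
  qed
  have rb: "0 < r * \<beta>^2" using r0 bp by simp
  have tau: "r * \<beta>^2 / 8 < \<mu>" using mu rb by linarith
  have "measure_pmf.prob Jnt {x. Stat x < r * \<beta>^2 / 8} \<le> (r * (1/m + \<beta>^2)^2) / (\<mu> - r * \<beta>^2 / 8)^2"
  proof (rule cheb_low[OF abs_Stat])
    show "measure_pmf.expectation Jnt Stat = \<mu>" unfolding \<mu>_def e_def by (rule M1)
    show "measure_pmf.expectation Jnt (\<lambda>x. Stat x ^ 2) \<le> r * (1/m + \<beta>^2)^2 + \<mu>^2"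
      unfolding \<mu>_def e_def by (rule M2)
    show "r * \<beta>^2 / 8 < \<mu>" by (rule tau)
  qed
  also have "\<dots> \<le> (r * (4 * \<beta>^4)) / (r * \<beta>^2 / 8)^2"
  proof (rule frac_le)
    show "0 \<le> r * (4 * \<beta>^4)" by simp
    show "r * (1/m + \<beta>^2)^2 \<le> r * (4 * \<beta>^4)" by (rule V)
    show "0 < (r * \<beta>^2 / 8)^2" using r0 bp by simp
    have "r * \<beta>^2 / 8 \<le> \<mu> - r * \<beta>^2 / 8" using mu by simp
    then show "(r * \<beta>^2 / 8)^2 \<le> (\<mu> - r * \<beta>^2 / 8)^2" by (intro power_mono) (use r0 bp in auto)
  qed
  also have "\<dots> = 256 / r" using r0 bp by (simp add: field_simps power2_eq_square power4_eq_xxxx)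
  finally show ?thesis .
qed

lemma reg_bound:
  assumes mb: "1/m \<le> \<beta>^2" and r0: "r > 0" and bp: "\<beta> > 0"
  shows "measure_pmf.prob Jnt {x. r * \<beta>^2 / 8 \<le> Stat x} \<le>
     256 / r + 64 * (\<Sum>k<r. \<Sum>a\<in>Aset m k. \<Sum>b\<in>Bset m k. ovl (s a) (s b)) / (r * (real m)^2)"
proof -
  define Ov where "Ov = (\<Sum>k<r. \<Sum>a\<in>Aset m k. \<Sum>b\<in>Bset m k. ovl (s a) (s b))"
  define e where "e k = measure_pmf.expectation (CP II) (\<lambda>g. hk g k)" for k
  have O0: "0 \<le> Ov" unfolding Ov_def by (intro sum_nonneg) (auto simp: ovl_def)
  have Or: "Ov \<le> r * (real m)^2"
  proof -
    have "Ov \<le> (\<Sum>k<r. \<Sum>a\<in>Aset m k. \<Sum>b\<in>Bset m k. (1::real))" unfolding Ov_def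
      by (intro sum_mono) (auto simp: ovl_def)
    then show ?thesis by (simp add: power2_eq_square)
  qed
  have se: "\<bar>\<Sum>k<r. e k\<bar> \<le> \<beta>^2 / (real m)^2 * Ov"
  proof -
    have "\<bar>\<Sum>k<r. e k\<bar> \<le> (\<Sum>k<r. \<bar>e k\<bar>)" by (rule sum_abs)
    also have "\<dots> \<le> (\<Sum>k<r. \<beta>^2 / (real m)^2 * (\<Sum>a\<in>Aset m k. \<Sum>b\<in>Bset m k. ovl (s a) (s b)))"
      unfolding e_def by (intro sum_mono e_reg) simp
    also have "\<dots> = \<beta>^2 / (real m)^2 * Ov" unfolding Ov_def by (simp add: sum_distrib_left)
    finally show ?thesis .
  qed
  have se2: "(\<Sum>k<r. e k)^2 \<le> \<beta>^4 * r * Ov / (real m)^2"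
  proof -
    have "(\<Sum>k<r. e k)^2 \<le> (\<beta>^2 / (real m)^2 * Ov)^2" by (rule sq_le[OF se])
    also have "\<dots> = \<beta>^4 / (real m)^2 * Ov * (Ov / (real m)^2)" by (simp add: power2_eq_square power4_eq_xxxx)
    also have "\<dots> \<le> \<beta>^4 / (real m)^2 * Ov * r"
    proof (rule mult_left_mono)
      show "Ov / (real m)^2 \<le> r" using Or m0 by (simp add: field_simps)
      show "0 \<le> \<beta>^4 / (real m)^2 * Ov" using O0 by simp
    qed
    finally show ?thesis by (simp add: mult.commute mult.left_commute)
  qed
  have V: "r * (1/m + \<beta>^2)^2 \<le> r * (4 * \<beta>^4)"
  proof -
    have "1/m + \<beta>^2 \<le> 2 * \<beta>^2" using mb by simp
    then have "(1/m + \<beta>^2)^2 \<le> (2 * \<beta>^2)^2" by (intro power_mono) auto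
    then show ?thesis by (intro mult_left_mono) (auto simp: power_mult_distrib)
  qed
  have tp: "0 < r * \<beta>^2 / 8" using r0 bp by simp
  have "measure_pmf.prob Jnt {x. r * \<beta>^2 / 8 \<le> Stat x} \<le> measure_pmf.expectation Jnt (\<lambda>x. Stat x ^ 2) / (r * \<beta>^2 / 8)^2"
    by (rule markov2[OF abs_Stat tp])
  also have "\<dots> \<le> (r * (4 * \<beta>^4) + \<beta>^4 * r * Ov / (real m)^2) / (r * \<beta>^2 / 8)^2"
  proof (rule divide_right_mono)
    show "measure_pmf.expectation Jnt (\<lambda>x. Stat x ^ 2) \<le> r * (4 * \<beta>^4) + \<beta>^4 * r * Ov / (real m)^2"
      using M2 V se2 unfolding e_def by linarith
  qed simp
  also have "\<dots> = 256 / r + 64 * Ov / (r * (real m)^2)"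
    using r0 bp m0 by (simp add: field_simps power2_eq_square power4_eq_xxxx)
  finally show ?thesis unfolding Ov_def .
qed

end


lemma exp_cong_supp:
  fixes f g :: "'a \<Rightarrow> real"
  assumes "\<And>x. x \<in> set_pmf p \<Longrightarrow> f x = g x"
  shows "measure_pmf.expectation p f = measure_pmf.expectation p g"
  by (intro integral_cong_AE) (use assms in \<open>auto simp: AE_measure_pmf_iff\<close>)

definition Spmf :: "nat \<Rightarrow> nat \<Rightarrow> (nat \<Rightarrow> nat) pmf" where
  "Spmf n RR = Pi_pmf {..<RR} 0 (\<lambda>_. pmf_of_set {..<n})"

lemma set_pmf_lt: fixes n :: nat shows "n > 0 \<Longrightarrow> set_pmf (pmf_of_set {..<n}) = {..<n}"
  by (rule set_pmf_of_set) auto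

lemma set_Spmf: "n > 0 \<Longrightarrow> s \<in> set_pmf (Spmf n RR) \<Longrightarrow> j < RR \<Longrightarrow> s j < n"
  by (auto simp: Spmf_def set_Pi_pmf PiE_dflt_def set_pmf_lt)

lemma fin_Spmf: "n > 0 \<Longrightarrow> finite (set_pmf (Spmf n RR))"
  unfolding Spmf_def by (rule fin_Pi) (auto simp: set_pmf_lt)

lemma int_lt: fixes n :: nat and F :: "nat \<Rightarrow> real"
  shows "n > 0 \<Longrightarrow> measure_pmf.expectation (pmf_of_set {..<n}) F = (\<Sum>x<n. F x) / real n"
  by (subst integral_pmf_of_set) auto

lemma E_ind_s: "n > 0 \<Longrightarrow> a < RR \<Longrightarrow> x < n \<Longrightarrow>
   measure_pmf.expectation (Spmf n RR) (\<lambda>s. if s a = x then 1 else 0 :: real) = 1 / n"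
proof -
  assume n: "n > 0" and a: "a < RR" and x: "x < n"
  have "measure_pmf.expectation (Spmf n RR) (\<lambda>s. if s a = x then 1 else 0 :: real) =
        measure_pmf.expectation (pmf_of_set {..<n}) (\<lambda>z. if z = x then 1 else 0 :: real)"
    unfolding Spmf_def by (rule marg) (use a in auto)
  also have "\<dots> = 1 / n" using n x by (simp add: int_lt sum.delta)
  finally show ?thesis .
qed

lemma E_pair_s:
  fixes F :: "nat \<Rightarrow> nat \<Rightarrow> real"
  assumes n: "n > 0" and ab: "a < RR" "b < RR" "a \<noteq> b"
  shows "measure_pmf.expectation (Spmf n RR) (\<lambda>s. F (s a) (s b)) = (\<Sum>x<n. \<Sum>y<n. F x y) / (real n)^2"
proof -
  let ?i = "\<lambda>s a x. if s a = x then 1 else 0 :: real"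
  have "measure_pmf.expectation (Spmf n RR) (\<lambda>s. F (s a) (s b)) =
     measure_pmf.expectation (Spmf n RR) (\<lambda>s. \<Sum>x<n. \<Sum>y<n. F x y * (?i s a x * ?i s b y))"
  proof (rule exp_cong_supp)
    fix s assume s: "s \<in> set_pmf (Spmf n RR)"
    have sa: "s a < n" and sb: "s b < n" using set_Spmf[OF n s] ab by auto
    have e1: "F x y * (?i s a x * ?i s b y) = (if s a = x then (if s b = y then F x y else 0) else 0)" for x y
      by simp
    have "(\<Sum>x<n. \<Sum>y<n. F x y * (?i s a x * ?i s b y)) = (\<Sum>x<n. \<Sum>y<n. (if s a = x then (if s b = y then F x y else 0) else 0))"
      by (simp only: e1)
    also have "\<dots> = (\<Sum>x<n. if s a = x then (\<Sum>y<n. if s b = y then F x y else 0) else 0)"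
      by (intro sum.cong refl) simp
    also have "\<dots> = (\<Sum>x<n. if s a = x then F x (s b) else 0)"
      using sb by (intro sum.cong refl) (simp add: sum.delta)
    also have "\<dots> = F (s a) (s b)" using sa by (simp add: sum.delta)
    finally show "F (s a) (s b) = (\<Sum>x<n. \<Sum>y<n. F x y * (?i s a x * ?i s b y))" by (rule sym)
  qed
  also have "\<dots> = (\<Sum>x<n. \<Sum>y<n. F x y * measure_pmf.expectation (Spmf n RR) (\<lambda>s. ?i s a x * ?i s b y))"
    using fin_Spmf[OF n] by (simp add: integrable_measure_pmf_finite)
  also have "\<dots> = (\<Sum>x<n. \<Sum>y<n. F x y * (1 / n) * (1 / n))"
  proof (intro sum.cong refl)
    fix x y assume x: "x \<in> {..<n}" and y: "y \<in> {..<n}"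
    have "measure_pmf.expectation (Spmf n RR) (\<lambda>s. ?i s a x * ?i s b y) =
       measure_pmf.expectation (Spmf n RR) (\<lambda>s. ?i s a x) * measure_pmf.expectation (Spmf n RR) (\<lambda>s. ?i s b y)"
      unfolding Spmf_def
      by (rule indep_blocks[where U="{a}" and V="{b}" and Bx=1 and By=1]) (use ab in auto)
    also have "\<dots> = (1/n) * (1/n)" using E_ind_s[OF n ab(1)] E_ind_s[OF n ab(2)] x y by simp
    finally show "F x y * measure_pmf.expectation (Spmf n RR) (\<lambda>s. ?i s a x * ?i s b y) = F x y * (1 / n) * (1 / n)" by simp
  qed
  also have "\<dots> = (\<Sum>x<n. \<Sum>y<n. F x y) / (real n)^2"
    by (simp add: sum_divide_distrib power2_eq_square)
  finally show ?thesis .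
qed

lemma E_single_s:
  fixes F :: "nat \<Rightarrow> real"
  assumes n: "n > 0" and a: "a < RR"
  shows "measure_pmf.expectation (Spmf n RR) (\<lambda>s. F (s a)) = (\<Sum>x<n. F x) / n"
proof -
  have "measure_pmf.expectation (Spmf n RR) (\<lambda>s. F (s a)) = measure_pmf.expectation (pmf_of_set {..<n}) F"
    unfolding Spmf_def by (rule marg) (use a in auto)
  also have "\<dots> = (\<Sum>x<n. F x) / n" using n by (rule int_lt)
  finally show ?thesis .
qed

lemma nbhd_sub: "simple_graph n G \<Longrightarrow> nbhd G i \<subseteq> {..<n}"
  by (auto simp: simple_graph_def nbhd_def doubleton_eq_iff)

lemma nbhd_sym: "j \<in> nbhd G i \<longleftrightarrow> i \<in> nbhd G j"
  by (simp add: nbhd_def insert_commute)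

lemma ovl_count:
  assumes G: "G \<in> regular_graphs n t"
  shows "(\<Sum>x<n. \<Sum>y<n. (if nbhd G x \<inter> nbhd G y = {} then 0 else 1 :: real)) \<le> n * (real t)^2"
proof -
  have sg: "simple_graph n G" and deg: "\<And>i. i < n \<Longrightarrow> card (nbhd G i) = t"
    using G by (auto simp: regular_graphs_def)
  let ?S = "{(x, y). x < n \<and> y < n \<and> nbhd G x \<inter> nbhd G y \<noteq> {}}"
  have sub: "?S \<subseteq> (\<Union>u<n. nbhd G u \<times> nbhd G u)"
  proof
    fix z assume "z \<in> ?S"
    then obtain x y u where z: "z = (x, y)" "u \<in> nbhd G x" "u \<in> nbhd G y" by auto
    have "u < n" using z(2) nbhd_sub[OF sg] by auto
    moreover have "x \<in> nbhd G u" "y \<in> nbhd G u" using z nbhd_sym by auto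
    ultimately show "z \<in> (\<Union>u<n. nbhd G u \<times> nbhd G u)" using z(1) by auto
  qed
  have fin: "finite (nbhd G u)" for u using nbhd_sub[OF sg] finite_subset by blast
  have "(\<Sum>x<n. \<Sum>y<n. (if nbhd G x \<inter> nbhd G y = {} then 0 else 1 :: real)) = real (card ?S)"
  proof -
    have "(\<Sum>x<n. \<Sum>y<n. (if nbhd G x \<inter> nbhd G y = {} then 0 else 1 :: real)) =
          (\<Sum>z\<in>{..<n} \<times> {..<n}. (if nbhd G (fst z) \<inter> nbhd G (snd z) = {} then 0 else 1 :: real))"
      by (simp add: sum.cartesian_product case_prod_beta)
    also have "\<dots> = (\<Sum>z\<in>{..<n} \<times> {..<n}. (if nbhd G (fst z) \<inter> nbhd G (snd z) \<noteq> {} then 1 else 0 :: real))"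
      by (intro sum.cong refl) simp
    also have "\<dots> = real (card {z \<in> {..<n} \<times> {..<n}. nbhd G (fst z) \<inter> nbhd G (snd z) \<noteq> {}})"
      by (subst sum.If_cases) (simp_all add: Int_def conj_commute)
    also have "{z \<in> {..<n} \<times> {..<n}. nbhd G (fst z) \<inter> nbhd G (snd z) \<noteq> {}} = ?S" by auto
    finally show ?thesis .
  qed
  also have "card ?S \<le> card (\<Union>u<n. nbhd G u \<times> nbhd G u)"
    by (rule card_mono[OF _ sub]) (use fin in auto)
  also have "\<dots> \<le> (\<Sum>u<n. card (nbhd G u \<times> nbhd G u))" by (rule card_UN_le) simp
  also have "\<dots> = (\<Sum>u<n. t * t)" using deg by (simp add: card_cartesian_product)
  finally show ?thesis by (simp add: power2_eq_square)
qed


definition slotY :: "nat \<Rightarrow> (nat \<Rightarrow> nat) \<Rightarrow> nat \<Rightarrow> real" where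
  "slotY n x j = (\<Sum>i<n. if x i \<noteq> 0 \<and> (x i - 1) div 2 = j then yv (x i) else 0)"

definition StatP :: "nat \<Rightarrow> nat \<Rightarrow> nat \<Rightarrow> (nat \<Rightarrow> nat) \<Rightarrow> real" where
  "StatP n m r x = (\<Sum>k<r. ((\<Sum>j\<in>Aset m k. slotY n x j) / m) * ((\<Sum>j\<in>Bset m k. slotY n x j) / m))"

lemma enc_out_dec: "(enc_out j b - 1) div 2 = j" "enc_out j b \<noteq> 0"
  by (auto simp: enc_out_def)

context core begin

lemma set_OutP:
  assumes x: "x \<in> set_pmf (OutP g)" and i: "i < n"
  shows "(is_rep RR s i \<longrightarrow> (\<exists>b. x i = enc_out (first_slot RR s i) b)) \<and> (\<not> is_rep RR s i \<longrightarrow> x i = 0)"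
proof -
  have "x i \<in> set_pmf (node_out n m RR \<beta> D s g i (nbhd G i))"
    using x i by (auto simp: OutP_def set_Pi_pmf PiE_dflt_def)
  then show ?thesis by (auto simp: node_out_def)
qed

lemma slotY_eq:
  assumes x: "x \<in> set_pmf (OutP g)" and j: "j < RR"
  shows "slotY n x j = Ys j x"
proof -
  have c: "(x i \<noteq> 0 \<and> (x i - 1) div 2 = j) \<longleftrightarrow> i = s j" if i: "i < n" for i
  proof (cases "is_rep RR s i")
    case True
    then obtain b where xb: "x i = enc_out (first_slot RR s i) b" using set_OutP[OF x i] by auto
    from True obtain j' where j': "j' < RR" "s j' = i" by (auto simp: is_rep_def)
    then have fs: "first_slot RR s i = j'" using first_s by auto
    show ?thesis
    proof
      assume "x i \<noteq> 0 \<and> (x i - 1) div 2 = j"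
      then have "j' = j" using xb fs enc_out_dec by simp
      then show "i = s j" using j' by simp
    next
      assume "i = s j"
      then have "j' = j" using fs first_s[OF j] by simp
      then show "x i \<noteq> 0 \<and> (x i - 1) div 2 = j" using xb fs enc_out_dec by simp
    qed
  next
    case False
    then have "x i = 0" using set_OutP[OF x i] by auto
    moreover have "i \<noteq> s j" using False rep_s[OF j] by auto
    ultimately show ?thesis by simp
  qed
  have "slotY n x j = (\<Sum>i<n. if i = s j then yv (x i) else 0)"
    unfolding slotY_def
  proof (intro sum.cong refl)
    fix i assume "i \<in> {..<n}"
    then have i: "i < n" by simp
    show "(if x i \<noteq> 0 \<and> (x i - 1) div 2 = j then yv (x i) else 0) = (if i = s j then yv (x i) else 0)"
      by (simp only: c[OF i])
  qed
  also have "\<dots> = yv (x (s j))" using srange[OF j] by (simp add: sum.delta')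
  finally show ?thesis by (simp add: Ys_def)
qed

lemma StatP_eq:
  assumes x: "x \<in> set_pmf (OutP g)"
  shows "StatP n m r x = Stat x"
  unfolding StatP_def Stat_def Zk_def av_def
proof (intro sum.cong refl)
  fix k assume k: "k \<in> {..<r}"
  have A: "(\<Sum>j\<in>Aset m k. slotY n x j) = (\<Sum>j\<in>Aset m k. Ys j x)"
    by (intro sum.cong refl slotY_eq[OF x]) (use AB_sub(1) k in auto)
  have B: "(\<Sum>j\<in>Bset m k. slotY n x j) = (\<Sum>j\<in>Bset m k. Ys j x)"
    by (intro sum.cong refl slotY_eq[OF x]) (use AB_sub(2) k in auto)
  show "(\<Sum>j\<in>Aset m k. slotY n x j) / real m * ((\<Sum>j\<in>Bset m k. slotY n x j) / real m) =
        (\<Sum>j\<in>Aset m k. Ys j x) / real m * ((\<Sum>j\<in>Bset m k. Ys j x) / real m)"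
    unfolding A B ..
qed

lemma prob_StatP:
  "measure_pmf.expectation (CP II) (\<lambda>g. measure_pmf.prob (OutP g) {x. \<tau> \<le> StatP n m r x}) =
   measure_pmf.prob Jnt {x. \<tau> \<le> Stat x}"
proof -
  have "measure_pmf.expectation (CP II) (\<lambda>g. measure_pmf.prob (OutP g) {x. \<tau> \<le> StatP n m r x}) =
        measure_pmf.expectation (CP II) (\<lambda>g. measure_pmf.expectation (OutP g) (\<lambda>x. indicator {x. \<tau> \<le> Stat x} x :: real))"
  proof (intro Bochner_Integration.integral_cong refl)
    fix g
    have "measure_pmf.prob (OutP g) {x. \<tau> \<le> StatP n m r x} = measure_pmf.expectation (OutP g) (\<lambda>x. indicator {x. \<tau> \<le> StatP n m r x} x :: real)"
      by simp
    also have "\<dots> = measure_pmf.expectation (OutP g) (\<lambda>x. indicator {x. \<tau> \<le> Stat x} x :: real)"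
      by (rule exp_cong_supp) (simp add: StatP_eq indicator_def)
    finally show "measure_pmf.prob (OutP g) {x. \<tau> \<le> StatP n m r x} = measure_pmf.expectation (OutP g) (\<lambda>x. indicator {x. \<tau> \<le> Stat x} x :: real)" .
  qed
  also have "\<dots> = measure_pmf.expectation Jnt (\<lambda>x. indicator {x. \<tau> \<le> Stat x} x :: real)"
    by (rule E_Jnt[symmetric, where B=1]) (simp add: indicator_def)
  also have "\<dots> = measure_pmf.prob Jnt {x. \<tau> \<le> Stat x}" by simp
  finally show ?thesis .
qed

end


definition encR :: "nat \<Rightarrow> nat \<Rightarrow> nat \<Rightarrow> (nat \<Rightarrow> nat) \<times> (nat \<times> nat \<Rightarrow> bool) \<Rightarrow> nat" where
  "encR n RR r z = to_nat (map (fst z) [0..<RR], map (\<lambda>k. map (\<lambda>u. snd z (k, u)) [0..<n]) [0..<r])"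

definition decS :: "nat \<Rightarrow> nat \<Rightarrow> nat" where
  "decS \<rho> j = fst (from_nat \<rho> :: nat list \<times> bool list list) ! j"

definition decG :: "nat \<Rightarrow> nat \<times> nat \<Rightarrow> bool" where
  "decG \<rho> ku = snd (from_nat \<rho> :: nat list \<times> bool list list) ! fst ku ! snd ku"

lemma decS_enc: "j < RR \<Longrightarrow> decS (encR n RR r (s, g)) j = s j"
  by (simp add: decS_def encR_def)

lemma decG_enc: "k < r \<Longrightarrow> u < n \<Longrightarrow> decG (encR n RR r (s, g)) (k, u) = g (k, u)"
  by (simp add: decG_def encR_def)

lemma node_out_cong:
  assumes m0: "m > 0" and hs: "\<And>j. j < 2*r*m \<Longrightarrow> s j = s' j"
    and hg: "\<And>k u. k < r \<Longrightarrow> u < n \<Longrightarrow> g (k, u) = g' (k, u)"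
  shows "node_out n m (2*r*m) \<beta> D s g i N = node_out n m (2*r*m) \<beta> D s' g' i N"
proof -
  have rep: "is_rep (2*r*m) s i = is_rep (2*r*m) s' i" using hs by (auto simp: is_rep_def)
  have fs: "first_slot (2*r*m) s i = first_slot (2*r*m) s' i"
    unfolding first_slot_def by (rule arg_cong[where f=Least]) (use hs in auto)
  show ?thesis
  proof (cases "is_rep (2*r*m) s i")
    case True
    define j where "j = first_slot (2*r*m) s i"
    have "j < 2*r*m" unfolding j_def first_slot_def using True
      by (auto simp: is_rep_def intro: LeastI2_ex)
    then have k: "j div (2*m) < r" using m0 by (simp add: div_less_iff_less_mult mult.commute mult.left_commute)
    have "qv n D g (j div (2*m)) N = qv n D g' (j div (2*m)) N"
      unfolding qv_def using hg[OF k] by (intro arg_cong[where f=clip] arg_cong[where f="\<lambda>z. z / D"] sum.cong) auto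
    then show ?thesis using True rep fs by (simp add: node_out_def j_def)
  next
    case False
    then show ?thesis using rep by (simp add: node_out_def)
  qed
qed

definition RhoA :: "nat \<Rightarrow> nat \<Rightarrow> nat \<Rightarrow> nat pmf" where
  "RhoA n m r = map_pmf (encR n (2*r*m) r) (pair_pmf (Spmf n (2*r*m)) (CP ({..<r} \<times> {..<n})))"

definition RA :: "nat \<Rightarrow> nat \<Rightarrow> nat \<Rightarrow> real \<Rightarrow> real \<Rightarrow> nat \<Rightarrow> nat \<Rightarrow> nat set \<Rightarrow> nat pmf" where
  "RA n m r \<beta> D \<rho> i N = node_out n m (2*r*m) \<beta> D (decS \<rho>) (decG \<rho>) i N"

definition PA :: "nat \<Rightarrow> nat \<Rightarrow> nat \<Rightarrow> real \<Rightarrow> (nat \<Rightarrow> nat) \<Rightarrow> label" where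
  "PA n m r \<tau> x = (if \<tau> \<le> StatP n m r x then Starpartite else Regular)"

lemma RA_enc: "m > 0 \<Longrightarrow> RA n m r \<beta> D (encR n (2*r*m) r (s, g)) = (\<lambda>i N. node_out n m (2*r*m) \<beta> D s g i N)"
  unfolding RA_def by (intro ext node_out_cong) (auto simp: decS_enc decG_enc)

definition OutA :: "nat \<Rightarrow> nat \<Rightarrow> nat \<Rightarrow> real \<Rightarrow> real \<Rightarrow> (nat \<Rightarrow> nat) \<Rightarrow> graph \<Rightarrow> (nat \<times> nat \<Rightarrow> bool) \<Rightarrow> (nat \<Rightarrow> nat) pmf" where
  "OutA n m r \<beta> D s G g = Pi_pmf {..<n} 0 (\<lambda>i. node_out n m (2*r*m) \<beta> D s g i (nbhd G i))"

lemma OutA_core: "core n m r \<beta> D s \<Longrightarrow> OutA n m r \<beta> D s G g = core.OutP n m r \<beta> D s G g"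
  by (simp add: OutA_def core.OutP_def)

lemma prob_bind: "measure_pmf.prob (bind_pmf p f) A = measure_pmf.expectation p (\<lambda>x. measure_pmf.prob (f x) A)"
proof -
  have "measure_pmf.prob (bind_pmf p f) A = measure_pmf.expectation (bind_pmf p f) (\<lambda>x. indicator A x :: real)" by simp
  also have "\<dots> = measure_pmf.expectation p (\<lambda>x. measure_pmf.expectation (f x) (\<lambda>y. indicator A y :: real))"
    by (rule exp_bind[where B=1]) (simp add: indicator_def)
  finally show ?thesis by simp
qed

lemma exp_pair2:
  fixes F :: "'a \<times> 'b \<Rightarrow> real"
  assumes "\<And>z. \<bar>F z\<bar> \<le> B"
  shows "measure_pmf.expectation (pair_pmf p q) F = measure_pmf.expectation p (\<lambda>x. measure_pmf.expectation q (\<lambda>y. F (x, y)))"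
proof -
  have "measure_pmf.expectation (pair_pmf p q) F = measure_pmf.expectation p (\<lambda>x. measure_pmf.expectation (bind_pmf q (\<lambda>y. return_pmf (x, y))) F)"
    unfolding pair_pmf_def by (rule exp_bind[OF assms])
  also have "\<dots> = measure_pmf.expectation p (\<lambda>x. measure_pmf.expectation q (\<lambda>y. F (x, y)))"
    by (intro Bochner_Integration.integral_cong refl) (subst exp_bind[OF assms], simp)
  finally show ?thesis .
qed

lemma alg_prob:
  assumes m0: "m > 0"
  shows "measure_pmf.prob (alg_out n (RhoA n m r) (RA n m r \<beta> D) (PA n m r \<tau>) G) {L} =
    measure_pmf.expectation (Spmf n (2*r*m)) (\<lambda>s. measure_pmf.expectation (CP ({..<r} \<times> {..<n}))
      (\<lambda>g. measure_pmf.prob (OutA n m r \<beta> D s G g) {x. PA n m r \<tau> x = L}))"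
proof -
  have "measure_pmf.prob (alg_out n (RhoA n m r) (RA n m r \<beta> D) (PA n m r \<tau>) G) {L} =
     measure_pmf.expectation (RhoA n m r) (\<lambda>\<rho>. measure_pmf.prob (map_pmf (PA n m r \<tau>) (rand_outputs n (RA n m r \<beta> D) \<rho> G)) {L})"
    unfolding alg_out_def by (rule prob_bind)
  also have "\<dots> = measure_pmf.expectation (pair_pmf (Spmf n (2*r*m)) (CP ({..<r} \<times> {..<n})))
      (\<lambda>z. measure_pmf.prob (map_pmf (PA n m r \<tau>) (rand_outputs n (RA n m r \<beta> D) (encR n (2*r*m) r z) G)) {L})"
    unfolding RhoA_def by simp
  also have "\<dots> = measure_pmf.expectation (pair_pmf (Spmf n (2*r*m)) (CP ({..<r} \<times> {..<n})))
      (\<lambda>z. measure_pmf.prob (OutA n m r \<beta> D (fst z) G (snd z)) {x. PA n m r \<tau> x = L})"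
  proof (intro Bochner_Integration.integral_cong refl)
    fix z :: "(nat \<Rightarrow> nat) \<times> (nat \<times> nat \<Rightarrow> bool)"
    obtain s g where z: "z = (s, g)" by (cases z)
    have "rand_outputs n (RA n m r \<beta> D) (encR n (2*r*m) r z) G = OutA n m r \<beta> D s G g"
      unfolding rand_outputs_def OutA_def z RA_enc[OF m0] ..
    then show "measure_pmf.prob (map_pmf (PA n m r \<tau>) (rand_outputs n (RA n m r \<beta> D) (encR n (2*r*m) r z) G)) {L} =
        measure_pmf.prob (OutA n m r \<beta> D (fst z) G (snd z)) {x. PA n m r \<tau> x = L}"
      by (simp add: z vimage_def)
  qed
  also have "\<dots> = measure_pmf.expectation (Spmf n (2*r*m)) (\<lambda>s. measure_pmf.expectation (CP ({..<r} \<times> {..<n}))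
      (\<lambda>g. measure_pmf.prob (OutA n m r \<beta> D s G g) {x. PA n m r \<tau> x = L}))"
    using exp_pair2[where B=1 and F="\<lambda>z. measure_pmf.prob (OutA n m r \<beta> D (fst z) G (snd z)) {x. PA n m r \<tau> x = L}"
      and p="Spmf n (2*r*m)" and q="CP ({..<r} \<times> {..<n})"] by simp
  finally show ?thesis .
qed


lemma exp_ge:
  fixes f g :: "'a \<Rightarrow> real"
  assumes "\<And>x. x \<in> set_pmf p \<Longrightarrow> g x \<le> f x" "finite (set_pmf p)"
  shows "measure_pmf.expectation p g \<le> measure_pmf.expectation p f"
  by (intro integral_mono_AE) (use assms in \<open>auto simp: AE_measure_pmf_iff integrable_measure_pmf_finite\<close>)

definition dupS :: "nat \<Rightarrow> (nat \<Rightarrow> nat) \<Rightarrow> real" where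
  "dupS RR s = (\<Sum>j<RR. \<Sum>j'\<in>{..<RR} - {j}. if s j = s j' then 1 else 0)"

lemma dupS_nonneg: "0 \<le> dupS RR s" unfolding dupS_def by (intro sum_nonneg) auto

lemma dupS_ge1: "\<not> inj_on s {..<RR} \<Longrightarrow> 1 \<le> dupS RR s"
proof -
  assume "\<not> inj_on s {..<RR}"
  then obtain j j' where jj: "j < RR" "j' < RR" "j \<noteq> j'" "s j = s j'" by (auto simp: inj_on_def)
  have nn: "0 \<le> (\<Sum>j'\<in>{..<RR} - {i}. if s i = s j' then 1 else 0 :: real)" for i
    by (intro sum_nonneg) simp
  have "1 \<le> (\<Sum>j'\<in>{..<RR} - {j}. if s j = s j' then 1 else 0 :: real)"
  proof -
    have "(if s j = s j' then 1 else 0 :: real) \<le> (\<Sum>j'\<in>{..<RR} - {j}. if s j = s j' then 1 else 0)"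
      by (rule member_le_sum) (use jj in auto)
    then show ?thesis using jj by simp
  qed
  also have "\<dots> \<le> dupS RR s" unfolding dupS_def
    by (rule member_le_sum[where f="\<lambda>j. \<Sum>j'\<in>{..<RR} - {j}. if s j = s j' then 1 else 0 :: real"]) (use jj nn in auto)
  finally show ?thesis .
qed

lemma E_dupS:
  assumes n: "n > 0"
  shows "measure_pmf.expectation (Spmf n RR) (dupS RR) \<le> real RR ^ 2 / n"
proof -
  have "measure_pmf.expectation (Spmf n RR) (dupS RR) =
     (\<Sum>j<RR. \<Sum>j'\<in>{..<RR} - {j}. measure_pmf.expectation (Spmf n RR) (\<lambda>s. if s j = s j' then 1 else 0))"
    unfolding dupS_def using fin_Spmf[OF n] by (simp add: integrable_measure_pmf_finite)
  also have "\<dots> = (\<Sum>j<RR. \<Sum>j'\<in>{..<RR} - {j}. 1 / n)"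
  proof (intro sum.cong refl)
    fix j j' assume j: "j \<in> {..<RR}" and j': "j' \<in> {..<RR} - {j}"
    have "measure_pmf.expectation (Spmf n RR) (\<lambda>s. (\<lambda>x y. if x = y then 1 else 0 :: real) (s j) (s j')) =
      (\<Sum>x<n. \<Sum>y<n. (if x = y then 1 else 0 :: real)) / (real n)^2"
      by (rule E_pair_s[OF n]) (use j j' in auto)
    also have "\<dots> = 1 / n" using n by (simp add: sum.delta power2_eq_square)
    finally show "measure_pmf.expectation (Spmf n RR) (\<lambda>s. if s j = s j' then 1 else 0) = 1 / n" by simp
  qed
  also have "\<dots> \<le> (\<Sum>j<RR. \<Sum>j'<RR. 1 / n)"
    by (intro sum_mono sum_mono2) auto
  also have "\<dots> = real RR ^ 2 / n" by (simp add: power2_eq_square)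
  finally show ?thesis .
qed

definition hitS :: "nat \<Rightarrow> nat set \<Rightarrow> (nat \<Rightarrow> nat) \<Rightarrow> real" where
  "hitS RR T s = (\<Sum>j<RR. if s j \<in> T then 1 else 0)"

lemma hitS_ge1: "j < RR \<Longrightarrow> s j \<in> T \<Longrightarrow> 1 \<le> hitS RR T s"
  unfolding hitS_def
  by (rule order_trans[OF _ member_le_sum[where i=j]]) auto

lemma hitS_nonneg: "0 \<le> hitS RR T s" unfolding hitS_def by (intro sum_nonneg) auto

lemma E_hitS:
  assumes n: "n > 0" and T: "T \<subseteq> {..<n}"
  shows "measure_pmf.expectation (Spmf n RR) (hitS RR T) = real RR * card T / n"
proof -
  have "measure_pmf.expectation (Spmf n RR) (hitS RR T) =
     (\<Sum>j<RR. measure_pmf.expectation (Spmf n RR) (\<lambda>s. (\<lambda>x. if x \<in> T then 1 else 0 :: real) (s j)))"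
    unfolding hitS_def using fin_Spmf[OF n] by (simp add: integrable_measure_pmf_finite)
  also have "\<dots> = (\<Sum>j<RR. (\<Sum>x<n. if x \<in> T then 1 else 0 :: real) / n)"
    by (intro sum.cong refl E_single_s[OF n]) auto
  also have "(\<Sum>x<n. if x \<in> T then 1 else 0 :: real) = card T"
  proof -
    have "(\<Sum>x<n. if x \<in> T then 1 else 0 :: real) = real (card ({..<n} \<inter> T))"
      by (simp add: sum.If_cases)
    also have "{..<n} \<inter> T = T" using T by auto
    finally show ?thesis .
  qed
  finally show ?thesis by simp
qed


lemma prob_nonneg_exp: "0 \<le> measure_pmf.expectation p (\<lambda>g. measure_pmf.prob (q g) A)"
  by (intro Bochner_Integration.integral_nonneg) simp

lemma star_G:
  assumes m0: "m > 0" and r0: "r > 0" and bp: "0 < \<beta>" and b1: "\<beta> \<le> 1/2"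
    and Dd: "D = real (2*r*m)" and mb: "1/m \<le> \<beta>^2" and n0: "n > 0"
    and T: "T \<subseteq> {..<n}" and tD: "real (card T) = D^2"
  shows "1 - 256/r - real (2*r*m)^2/n - real (2*r*m) * card T / n \<le>
    measure_pmf.prob (alg_out n (RhoA n m r) (RA n m r \<beta> D) (PA n m r (r*\<beta>^2/8)) (starpartite n T)) {Starpartite}"
proof -
  define RR where "RR = 2*r*m"
  define \<tau> where "\<tau> = r*\<beta>^2/8"
  define f where "f s = measure_pmf.expectation (CP ({..<r} \<times> {..<n}))
      (\<lambda>g. measure_pmf.prob (OutA n m r \<beta> D s (starpartite n T) g) {x. PA n m r \<tau> x = Starpartite})" for s
  have D0: "D > 0" using Dd m0 r0 by simp
  have pt: "1 - 256/r - (dupS RR s + hitS RR T s) \<le> f s" if s: "s \<in> set_pmf (Spmf n RR)" for s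
  proof (cases "inj_on s {..<RR} \<and> (\<forall>j<RR. s j \<notin> T)")
    case True
    interpret C: core n m r \<beta> D s "starpartite n T"
      by unfold_locales (use m0 bp b1 D0 True set_Spmf[OF n0 s] in \<open>auto simp: RR_def\<close>)
    have "f s = measure_pmf.expectation (CP C.II) (\<lambda>g. measure_pmf.prob (C.OutP g) {x. \<tau> \<le> StatP n m r x})"
      unfolding f_def PA_def using OutA_core[OF C.core_axioms] by (simp add: if_split_eq1)
    also have "\<dots> = measure_pmf.prob C.Jnt {x. \<tau> \<le> C.Stat x}" by (rule C.prob_StatP)
    also have "\<dots> = 1 - measure_pmf.prob C.Jnt {x. C.Stat x < \<tau>}"
    proof -
      have "{x. \<tau> \<le> C.Stat x} = space (measure_pmf C.Jnt) - {x. C.Stat x < \<tau>}" by auto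
      moreover have "measure_pmf.prob C.Jnt (space (measure_pmf C.Jnt) - {x. C.Stat x < \<tau>}) = 1 - measure_pmf.prob C.Jnt {x. C.Stat x < \<tau>}"
        by (rule measure_pmf.prob_compl) simp
      ultimately show ?thesis by simp
    qed
    finally have "f s = 1 - measure_pmf.prob C.Jnt {x. C.Stat x < \<tau>}" .
    moreover have "measure_pmf.prob C.Jnt {x. C.Stat x < \<tau>} \<le> 256 / r"
      unfolding \<tau>_def by (rule C.star_bound[OF T refl]) (use True tD mb r0 bp in \<open>auto simp: RR_def\<close>)
    moreover have "0 \<le> dupS RR s + hitS RR T s" using dupS_nonneg hitS_nonneg by (simp add: add_nonneg_nonneg)
    ultimately show ?thesis by linarith
  next
    case False
    then have "1 \<le> dupS RR s + hitS RR T s"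
      using dupS_ge1[of s RR] hitS_ge1[of _ RR s T] dupS_nonneg[of RR s] hitS_nonneg[of RR T s] by force
    moreover have "0 \<le> f s" unfolding f_def by (rule prob_nonneg_exp)
    moreover have "0 \<le> 256 / real r" by simp
    ultimately show ?thesis by linarith
  qed
  have "measure_pmf.prob (alg_out n (RhoA n m r) (RA n m r \<beta> D) (PA n m r \<tau>) (starpartite n T)) {Starpartite} =
        measure_pmf.expectation (Spmf n RR) f"
    unfolding f_def RR_def by (rule alg_prob[OF m0])
  moreover have "measure_pmf.expectation (Spmf n RR) (\<lambda>s. 1 - 256/r - (dupS RR s + hitS RR T s)) \<le> measure_pmf.expectation (Spmf n RR) f"
    by (rule exp_ge[OF pt fin_Spmf[OF n0]])
  moreover have "measure_pmf.expectation (Spmf n RR) (\<lambda>s. 1 - 256/r - (dupS RR s + hitS RR T s)) =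
      1 - 256/r - (measure_pmf.expectation (Spmf n RR) (dupS RR) + measure_pmf.expectation (Spmf n RR) (hitS RR T))"
    using fin_Spmf[OF n0] by (simp add: integrable_measure_pmf_finite)
  moreover have "measure_pmf.expectation (Spmf n RR) (dupS RR) \<le> real RR ^ 2 / n" by (rule E_dupS[OF n0])
  moreover have "measure_pmf.expectation (Spmf n RR) (hitS RR T) = real RR * card T / n" by (rule E_hitS[OF n0 T])
  ultimately show ?thesis unfolding RR_def \<tau>_def by linarith
qed


definition ovlG :: "graph \<Rightarrow> nat \<Rightarrow> nat \<Rightarrow> real" where
  "ovlG G x y = (if nbhd G x \<inter> nbhd G y = {} then 0 else 1)"

definition Ovs :: "graph \<Rightarrow> nat \<Rightarrow> nat \<Rightarrow> (nat \<Rightarrow> nat) \<Rightarrow> real" where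
  "Ovs G m r s = (\<Sum>k<r. \<Sum>a\<in>Aset m k. \<Sum>b\<in>Bset m k. ovlG G (s a) (s b))"

lemma Ovs_nonneg: "0 \<le> Ovs G m r s" unfolding Ovs_def by (intro sum_nonneg) (simp add: ovlG_def)

lemma E_Ovs:
  assumes n0: "n > 0" and G: "G \<in> regular_graphs n t"
  shows "measure_pmf.expectation (Spmf n (2*r*m)) (Ovs G m r) \<le> r * (real m)^2 * (real t)^2 / n"
proof -
  have "measure_pmf.expectation (Spmf n (2*r*m)) (Ovs G m r) =
     (\<Sum>k<r. \<Sum>a\<in>Aset m k. \<Sum>b\<in>Bset m k. measure_pmf.expectation (Spmf n (2*r*m)) (\<lambda>s. ovlG G (s a) (s b)))"
    unfolding Ovs_def using fin_Spmf[OF n0] by (simp add: integrable_measure_pmf_finite)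
  also have "\<dots> \<le> (\<Sum>k<r. \<Sum>a\<in>Aset m k. \<Sum>b\<in>Bset m k. (real t)^2 / n)"
  proof (intro sum_mono)
    fix k a b assume k: "k \<in> {..<r}" and a: "a \<in> Aset m k" and b: "b \<in> Bset m k"
    have ab: "a < 2*r*m" "b < 2*r*m" "a \<noteq> b"
      using AB_lt[of k r a m] AB_lt[of k r b m] k a b AB_disj[of m k] by auto
    have "measure_pmf.expectation (Spmf n (2*r*m)) (\<lambda>s. ovlG G (s a) (s b)) = (\<Sum>x<n. \<Sum>y<n. ovlG G x y) / (real n)^2"
      by (rule E_pair_s[OF n0 ab])
    also have "\<dots> \<le> (n * (real t)^2) / (real n)^2"
      by (intro divide_right_mono) (use ovl_count[OF G] in \<open>simp_all add: ovlG_def\<close>)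
    also have "\<dots> = (real t)^2 / n" using n0 by (simp add: power2_eq_square)
    finally show "measure_pmf.expectation (Spmf n (2*r*m)) (\<lambda>s. ovlG G (s a) (s b)) \<le> (real t)^2 / n" .
  qed
  also have "\<dots> = r * (real m)^2 * (real t)^2 / n" by (simp add: power2_eq_square)
  finally show ?thesis .
qed

lemma reg_G:
  assumes m0: "m > 0" and r0: "r > 0" and bp: "0 < \<beta>" and b1: "\<beta> \<le> 1/2"
    and Dd: "D = real (2*r*m)" and mb: "1/m \<le> \<beta>^2" and n0: "n > 0"
    and G: "G \<in> regular_graphs n t"
  shows "1 - 256/r - real (2*r*m)^2/n - 64 * (real t)^2 / n \<le>
    measure_pmf.prob (alg_out n (RhoA n m r) (RA n m r \<beta> D) (PA n m r (r*\<beta>^2/8)) G) {Regular}"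
proof -
  define RR where "RR = 2*r*m"
  define \<tau> where "\<tau> = r*\<beta>^2/8"
  define f where "f s = measure_pmf.expectation (CP ({..<r} \<times> {..<n}))
      (\<lambda>g. measure_pmf.prob (OutA n m r \<beta> D s G g) {x. PA n m r \<tau> x = Regular})" for s
  have D0: "D > 0" using Dd m0 r0 by simp
  have pt: "1 - 256/r - 64 * Ovs G m r s / (r * (real m)^2) - dupS RR s \<le> f s" if s: "s \<in> set_pmf (Spmf n RR)" for s
  proof (cases "inj_on s {..<RR}")
    case True
    interpret C: core n m r \<beta> D s G
      by unfold_locales (use m0 bp b1 D0 True set_Spmf[OF n0 s] in \<open>auto simp: RR_def\<close>)
    have e1: "measure_pmf.prob (C.OutP g) {x. PA n m r \<tau> x = Regular} = 1 - measure_pmf.prob (C.OutP g) {x. \<tau> \<le> StatP n m r x}" for g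
    proof -
      have "{x. PA n m r \<tau> x = Regular} = space (measure_pmf (C.OutP g)) - {x. \<tau> \<le> StatP n m r x}"
        by (auto simp: PA_def)
      moreover have "measure_pmf.prob (C.OutP g) (space (measure_pmf (C.OutP g)) - {x. \<tau> \<le> StatP n m r x}) = 1 - measure_pmf.prob (C.OutP g) {x. \<tau> \<le> StatP n m r x}"
        by (rule measure_pmf.prob_compl) simp
      ultimately show ?thesis by simp
    qed
    have "f s = measure_pmf.expectation (CP C.II) (\<lambda>g. 1 - measure_pmf.prob (C.OutP g) {x. \<tau> \<le> StatP n m r x})"
      unfolding f_def using OutA_core[OF C.core_axioms] e1 by simp
    also have "\<dots> = 1 - measure_pmf.expectation (CP C.II) (\<lambda>g. measure_pmf.prob (C.OutP g) {x. \<tau> \<le> StatP n m r x})"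
      by simp
    also have "\<dots> = 1 - measure_pmf.prob C.Jnt {x. \<tau> \<le> C.Stat x}" by (simp only: C.prob_StatP)
    finally have fs: "f s = 1 - measure_pmf.prob C.Jnt {x. \<tau> \<le> C.Stat x}" .
    have eqO: "(\<Sum>k<r. \<Sum>a\<in>Aset m k. \<Sum>b\<in>Bset m k. C.ovl (s a) (s b)) = Ovs G m r s"
      unfolding Ovs_def ovlG_def C.ovl_def ..
    have "measure_pmf.prob C.Jnt {x. \<tau> \<le> C.Stat x} \<le> 256 / r + 64 * Ovs G m r s / (r * (real m)^2)"
      using C.reg_bound[OF mb r0 bp] unfolding \<tau>_def eqO .
    moreover have "0 \<le> dupS RR s" by (rule dupS_nonneg)
    ultimately show ?thesis using fs by linarith
  next
    case False
    then have "1 \<le> dupS RR s" by (rule dupS_ge1)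
    moreover have "0 \<le> f s" unfolding f_def by (rule prob_nonneg_exp)
    moreover have "0 \<le> 256 / real r" by simp
    moreover have "0 \<le> 64 * Ovs G m r s / (r * (real m)^2)" using Ovs_nonneg by simp
    ultimately show ?thesis by linarith
  qed
  have "measure_pmf.prob (alg_out n (RhoA n m r) (RA n m r \<beta> D) (PA n m r \<tau>) G) {Regular} =
        measure_pmf.expectation (Spmf n RR) f"
    unfolding f_def RR_def by (rule alg_prob[OF m0])
  moreover have "measure_pmf.expectation (Spmf n RR) (\<lambda>s. 1 - 256/r - 64 * Ovs G m r s / (r * (real m)^2) - dupS RR s) \<le> measure_pmf.expectation (Spmf n RR) f"
    by (rule exp_ge[OF pt fin_Spmf[OF n0]])
  moreover have "measure_pmf.expectation (Spmf n RR) (\<lambda>s. 1 - 256/r - 64 * Ovs G m r s / (r * (real m)^2) - dupS RR s) =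
      1 - 256/r - 64 * measure_pmf.expectation (Spmf n RR) (Ovs G m r) / (r * (real m)^2) - measure_pmf.expectation (Spmf n RR) (dupS RR)"
    using fin_Spmf[OF n0] by (simp add: integrable_measure_pmf_finite)
  moreover have "measure_pmf.expectation (Spmf n RR) (dupS RR) \<le> real RR ^ 2 / n" by (rule E_dupS[OF n0])
  moreover have "64 * measure_pmf.expectation (Spmf n RR) (Ovs G m r) / (r * (real m)^2) \<le> 64 * (real t)^2 / n"
  proof -
    have "measure_pmf.expectation (Spmf n RR) (Ovs G m r) \<le> r * (real m)^2 * (real t)^2 / n"
      unfolding RR_def by (rule E_Ovs[OF n0 G])
    then have "64 * measure_pmf.expectation (Spmf n RR) (Ovs G m r) / (r * (real m)^2) \<le> 64 * (r * (real m)^2 * (real t)^2 / n) / (r * (real m)^2)"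
      by (intro divide_right_mono mult_left_mono) auto
    also have "\<dots> = 64 * (real t)^2 / n" using r0 m0 by (simp add: field_simps)
    finally show ?thesis .
  qed
  ultimately show ?thesis unfolding RR_def \<tau>_def by linarith
qed


lemma lndp_A:
  assumes m0: "m > 0" and b0: "0 \<le> \<beta>" and b1: "\<beta> \<le> 1/2" and D0: "D > 0"
    and ce: "4 * \<beta> + 2 * \<beta> * real (2*r*m) / D \<le> \<epsilon>" and d0: "0 \<le> \<delta>"
  shows "LNDP n \<epsilon> \<delta> Rho (RA n m r \<beta> D)"
  unfolding LNDP_def
proof (intro ballI allI impI)
  fix \<rho> G G' assume nn: "node_neighbors n G G'"
  then obtain v where hG: "\<forall>e. v \<notin> e \<longrightarrow> (e \<in> G \<longleftrightarrow> e \<in> G')"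
    by (auto simp: node_neighbors_def)
  have hG': "\<forall>e. v \<notin> e \<longrightarrow> (e \<in> G' \<longleftrightarrow> e \<in> G)" using hG by auto
  let ?c = "exp (4 * \<beta> + 2 * \<beta> * real (2*r*m) / D)"
  have ro: "rand_outputs n (RA n m r \<beta> D) \<rho> H = Pi_pmf {..<n} 0 (\<lambda>i. node_out n m (2*r*m) \<beta> D (decS \<rho>) (decG \<rho>) i (nbhd H i))" for H
    by (simp add: rand_outputs_def RA_def)
  have c_le: "?c \<le> exp \<epsilon>" using ce by simp
  have one: "measure_pmf.prob (rand_outputs n (RA n m r \<beta> D) \<rho> H1) A \<le> exp \<epsilon> * measure_pmf.prob (rand_outputs n (RA n m r \<beta> D) \<rho> H2) A + \<delta>"
    if h: "\<forall>e. v \<notin> e \<longrightarrow> (e \<in> H1 \<longleftrightarrow> e \<in> H2)" for H1 H2 A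
  proof -
    have "measure_pmf.prob (rand_outputs n (RA n m r \<beta> D) \<rho> H1) A \<le> ?c * measure_pmf.prob (rand_outputs n (RA n m r \<beta> D) \<rho> H2) A"
      unfolding ro by (rule prob_from_pmf[OF priv_pmf[OF b0 b1 D0 h]]) simp
    also have "\<dots> \<le> exp \<epsilon> * measure_pmf.prob (rand_outputs n (RA n m r \<beta> D) \<rho> H2) A"
      by (rule mult_right_mono[OF c_le]) simp
    finally show ?thesis using d0 by linarith
  qed
  show "indist \<epsilon> \<delta> (rand_outputs n (RA n m r \<beta> D) \<rho> G) (rand_outputs n (RA n m r \<beta> D) \<rho> G')"
    unfolding indist_def using one[OF hG] one[OF hG'] by blast
qed

lemma fin_star: "finite (starpartite_graphs n t)"
proof -
  have "starpartite_graphs n t = starpartite n ` {T. T \<subseteq> {..<n} \<and> card T = t}"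
    by (auto simp: starpartite_graphs_def)
  moreover have "finite {T. T \<subseteq> {..<n} \<and> card T = t}"
    by (rule finite_subset[of _ "Pow {..<n}"]) auto
  ultimately show ?thesis by simp
qed

lemma ne_star: "t \<le> n \<Longrightarrow> starpartite_graphs n t \<noteq> {}"
proof -
  assume "t \<le> n"
  then have "{..<t} \<subseteq> {..<n} \<and> card {..<t} = t" by auto
  then have "starpartite n {..<t} \<in> starpartite_graphs n t" unfolding starpartite_graphs_def by blast
  then show ?thesis by blast
qed

lemma fin_reg: "finite (regular_graphs n t)"
proof -
  let ?E = "(\<lambda>(i, j). {i, j}) ` ({..<n} \<times> {..<n})"
  have "regular_graphs n t \<subseteq> Pow ?E"
    by (auto simp: regular_graphs_def simple_graph_def)
  moreover have "finite (Pow ?E)" by simp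
  ultimately show ?thesis by (rule finite_subset)
qed

lemma bind_lower:
  assumes fin: "finite S" and ne: "S \<noteq> {}" and h: "\<And>G. G \<in> S \<Longrightarrow> a \<le> measure_pmf.prob (f G) A"
  shows "a \<le> measure_pmf.prob (bind_pmf (pmf_of_set S) f) A"
proof -
  have "measure_pmf.prob (bind_pmf (pmf_of_set S) f) A = measure_pmf.expectation (pmf_of_set S) (\<lambda>G. measure_pmf.prob (f G) A)"
    by (rule prob_bind)
  moreover have "measure_pmf.expectation (pmf_of_set S) (\<lambda>G. a) \<le> measure_pmf.expectation (pmf_of_set S) (\<lambda>G. measure_pmf.prob (f G) A)"
    by (rule exp_ge) (use fin ne h in auto)
  ultimately show ?thesis by simp
qed


lemma numeric_core:
  fixes e L :: real and m :: nat
  assumes e0: "0 < e" and e1: "e < 1" and L1: "1 \<le> L" and mdef: "m = nat \<lceil>64 / e^2\<rceil>"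
  shows "real m \<ge> 64 / e^2" "real m \<le> 65 / e^2" "m > 0"
    "4096 * real m \<le> 266240 / e^2"
    "(4096 * real m)^2 \<le> 266240^2 * L^5 / e^6"
    "1000 * (4096 * real m)^4 \<le> 1000 * 266240^4 * L^10 / e^10"
proof -
  have e2: "0 < e^2" "e^2 < 1" using e0 e1 by (auto simp: power_less_one_iff)
  have "64 / e^2 > 0" using e2 by simp
  then have cpos: "\<lceil>64 / e^2\<rceil> > 0" by simp
  have rm: "real m = real_of_int \<lceil>64 / e^2\<rceil>" using cpos mdef by simp
  show g1: "real m \<ge> 64 / e^2" unfolding rm by (rule le_of_int_ceiling)
  have "real_of_int \<lceil>64 / e^2\<rceil> \<le> 64 / e^2 + 1" by (rule of_int_ceiling_le_add_one)
  also have "1 \<le> 1 / e^2" using e2 by simp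
  then have "64 / e^2 + 1 \<le> 65 / e^2" by simp
  finally show g2: "real m \<le> 65 / e^2" unfolding rm by simp
  show "m > 0" using cpos mdef by simp
  have g3: "4096 * real m \<le> 266240 / e^2" using g2 by simp
  then show "4096 * real m \<le> 266240 / e^2" .
  have p0: "0 \<le> 4096 * real m" by simp
  have s2: "(4096 * real m)^2 \<le> (266240 / e^2)^2" by (rule power_mono[OF g3 p0])
  also have "\<dots> = 266240^2 / e^4" by (simp add: power_divide power_mult[symmetric])
  also have "\<dots> \<le> 266240^2 / e^6"
  proof (rule divide_left_mono)
    show "e^6 \<le> e^4" using e0 e1 by (intro power_decreasing) auto
  qed (use e0 in auto)
  also have "\<dots> \<le> 266240^2 * L^5 / e^6"
  proof -
    have "1 \<le> L^5" using L1 by simp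
    then show ?thesis using e0 by (simp add: divide_right_mono)
  qed
  finally show "(4096 * real m)^2 \<le> 266240^2 * L^5 / e^6" .
  have s4: "(4096 * real m)^4 \<le> (266240 / e^2)^4" by (rule power_mono[OF g3 p0])
  also have "\<dots> = 266240^4 / e^8" by (simp add: power_divide power_mult[symmetric])
  also have "\<dots> \<le> 266240^4 / e^10"
  proof (rule divide_left_mono)
    show "e^10 \<le> e^8" using e0 e1 by (intro power_decreasing) auto
  qed (use e0 in auto)
  also have "\<dots> \<le> 266240^4 * L^10 / e^10"
  proof -
    have "1 \<le> L^10" using L1 by simp
    then show ?thesis using e0 by (simp add: divide_right_mono)
  qed
  finally show "1000 * (4096 * real m)^4 \<le> 1000 * 266240^4 * L^10 / e^10" by simp
qed


theorem theorem7p1: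
  "\<exists>C c :: real. C > 0 \<and> c > 0 \<and>
    (\<forall>eps delta :: real. 0 < eps \<and> eps < 1/2 \<and> 0 < delta \<and> delta < 1/10 \<longrightarrow>
      (\<exists>t :: nat. 0 < t \<and> real t \<le> C * (ln (1/delta)) ^ 5 / eps ^ 6 \<and>
        (\<forall>n :: nat. real n \<ge> c * (ln (1/delta)) ^ 10 / eps ^ 10 \<and> regular_graphs n t \<noteq> {} \<longrightarrow>
          (\<exists>(Rho :: nat pmf) (R :: nat \<Rightarrow> nat \<Rightarrow> nat set \<Rightarrow> nat pmf) (P :: (nat \<Rightarrow> nat) \<Rightarrow> label).
             LNDP n eps delta Rho R \<and>
             measure_pmf.prob (bind_pmf (pmf_of_set (starpartite_graphs n t)) (alg_out n Rho R P))
               {Starpartite} \<ge> 2/3 \<and>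
             measure_pmf.prob (bind_pmf (pmf_of_set (regular_graphs n t)) (alg_out n Rho R P))
               {Regular} \<ge> 2/3))))"
proof -
  have main: "\<exists>t :: nat. 0 < t \<and> real t \<le> 266240^2 * (ln (1/delta)) ^ 5 / eps ^ 6 \<and>
        (\<forall>n :: nat. real n \<ge> (1000 * 266240^4) * (ln (1/delta)) ^ 10 / eps ^ 10 \<and> regular_graphs n t \<noteq> {} \<longrightarrow>
          (\<exists>(Rho :: nat pmf) (R :: nat \<Rightarrow> nat \<Rightarrow> nat set \<Rightarrow> nat pmf) (P :: (nat \<Rightarrow> nat) \<Rightarrow> label).
             LNDP n eps delta Rho R \<and>
             measure_pmf.prob (bind_pmf (pmf_of_set (starpartite_graphs n t)) (alg_out n Rho R P))
               {Starpartite} \<ge> 2/3 \<and>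
             measure_pmf.prob (bind_pmf (pmf_of_set (regular_graphs n t)) (alg_out n Rho R P))
               {Regular} \<ge> 2/3))"
    if A: "0 < eps" "eps < 1/2" "0 < delta" "delta < 1/10" for eps delta :: real
  proof -
    define L where "L = ln (1/delta)"
    have L1: "1 \<le> L"
    proof -
      have "exp 1 \<le> (10::real)" using exp_le by simp
      also have "10 \<le> 1 / delta" using A by (simp add: field_simps)
      finally have "exp 1 \<le> 1 / delta" .
      then have "ln (exp 1) \<le> ln (1 / delta)" using A by (subst ln_le_cancel_iff) auto
      then show ?thesis by (simp add: L_def)
    qed
    define m where "m = nat \<lceil>64 / eps^2\<rceil>"
    have e1: "eps < 1" using A by simp
    note nc = numeric_core[OF A(1) e1 L1 m_def]
    define r :: nat where "r = 2048"
    define \<beta> where "\<beta> = eps / 8"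
    define RR where "RR = 2 * r * m"
    define D where "D = real RR"
    define t where "t = RR^2"
    have m0: "m > 0" by (rule nc(3))
    have RRr: "real RR = 4096 * real m" by (simp add: RR_def r_def)
    have RR1: "1 \<le> real RR" using m0 RRr by simp
    have tr: "real t = real RR ^ 2" by (simp add: t_def)
    have mb: "1 / m \<le> \<beta>^2"
    proof -
      have h1: "64 / eps^2 \<le> real m" by (rule nc(1))
      have pm: "0 < real m * (64 / eps^2)" using m0 A by simp
      have "1 / real m \<le> 1 / (64 / eps^2)" by (rule divide_left_mono[OF h1]) (use pm in auto)
      also have "\<dots> = \<beta>^2" by (simp add: \<beta>_def power_divide)
      finally show ?thesis .
    qed
    show ?thesis
    proof (intro exI[of _ t] conjI allI impI)
      show "0 < t" using m0 by (simp add: t_def RR_def r_def)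
      show "real t \<le> 266240^2 * (ln (1/delta)) ^ 5 / eps ^ 6"
        using nc(5) unfolding tr RRr L_def .
      fix n :: nat
      assume hn: "real n \<ge> (1000 * 266240^4) * (ln (1/delta)) ^ 10 / eps ^ 10 \<and> regular_graphs n t \<noteq> {}"
      have N: "1000 * real RR ^ 4 \<le> real n" using hn nc(6) unfolding RRr L_def by simp
      have n0: "n > 0" using N RR1 by (smt (verit) of_nat_0_less_iff one_le_power)
      have b4: "real RR ^ 2 \<le> real RR ^ 4" "real RR ^ 3 \<le> real RR ^ 4"
        using RR1 by (intro power_increasing; simp)+
      have q2: "real RR ^ 2 / n \<le> 1/1000" and q3: "real RR ^ 3 / n \<le> 1/1000" and q4: "real RR ^ 4 / n \<le> 1/1000"
        using N b4 n0 by (simp_all add: divide_le_eq)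
      have tn: "t \<le> n"
      proof -
        have p: "0 \<le> real RR ^ 4" by simp
        have "real RR ^ 4 \<le> real n" using N p by linarith
        then have "real t \<le> real n" using tr b4(1) by linarith
        then show ?thesis by (simp only: of_nat_le_iff)
      qed
      have D0: "D > 0" using RR1 by (simp add: D_def)
      have bp: "0 < \<beta>" "\<beta> \<le> 1/2" using A by (auto simp: \<beta>_def)
      show "\<exists>(Rho :: nat pmf) (R :: nat \<Rightarrow> nat \<Rightarrow> nat set \<Rightarrow> nat pmf) (P :: (nat \<Rightarrow> nat) \<Rightarrow> label).
             LNDP n eps delta Rho R \<and>
             measure_pmf.prob (bind_pmf (pmf_of_set (starpartite_graphs n t)) (alg_out n Rho R P))
               {Starpartite} \<ge> 2/3 \<and>
             measure_pmf.prob (bind_pmf (pmf_of_set (regular_graphs n t)) (alg_out n Rho R P))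
               {Regular} \<ge> 2/3"
      proof (intro exI conjI)
        show "LNDP n eps delta (RhoA n m r) (RA n m r \<beta> D)"
        proof (rule lndp_A[OF m0])
          show "0 \<le> \<beta>" "\<beta> \<le> 1/2" "0 < D" using bp D0 by auto
          show "0 \<le> delta" using A by simp
          have DD: "real (2 * r * m) = D" by (simp add: D_def RR_def)
          have eq: "2 * \<beta> * real (2 * r * m) / D = 2 * \<beta>" unfolding DD using D0 by simp
          show "4 * \<beta> + 2 * \<beta> * real (2 * r * m) / D \<le> eps" unfolding eq using A by (simp add: \<beta>_def)
        qed
        show "2/3 \<le> measure_pmf.prob (bind_pmf (pmf_of_set (starpartite_graphs n t)) (alg_out n (RhoA n m r) (RA n m r \<beta> D) (PA n m r (r*\<beta>^2/8)))) {Starpartite}"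
        proof (rule bind_lower[OF fin_star ne_star[OF tn]])
          fix G assume "G \<in> starpartite_graphs n t"
          then obtain T where T: "G = starpartite n T" "T \<subseteq> {..<n}" "card T = t"
            by (auto simp: starpartite_graphs_def)
          have tD: "real (card T) = D^2" using T(3) tr by (simp add: D_def)
          have h0: "1 - 256/r - real (2*r*m)^2/n - real (2*r*m) * card T / n \<le>
             measure_pmf.prob (alg_out n (RhoA n m r) (RA n m r \<beta> D) (PA n m r (r*\<beta>^2/8)) (starpartite n T)) {Starpartite}"
            by (rule star_G[OF m0 _ bp]) (use D_def RR_def mb n0 T tD r_def in auto)
          have e1: "real (2*r*m) * card T / n = real RR ^ 3 / n"
            using T(3) tr by (simp add: RR_def power3_eq_cube power2_eq_square)
          have e2: "real (2*r*m)^2/n = real RR ^ 2 / n" by (simp add: RR_def)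
          have e3: "256 / real r = 1/8" by (simp add: r_def)
          show "2/3 \<le> measure_pmf.prob (alg_out n (RhoA n m r) (RA n m r \<beta> D) (PA n m r (r*\<beta>^2/8)) G) {Starpartite}"
            using h0 q2 q3 unfolding T(1) e1 e2 e3 by linarith
        qed
        show "2/3 \<le> measure_pmf.prob (bind_pmf (pmf_of_set (regular_graphs n t)) (alg_out n (RhoA n m r) (RA n m r \<beta> D) (PA n m r (r*\<beta>^2/8)))) {Regular}"
        proof (rule bind_lower[OF fin_reg])
          show "regular_graphs n t \<noteq> {}" using hn by simp
          fix G assume G: "G \<in> regular_graphs n t"
          have h0: "1 - 256/r - real (2*r*m)^2/n - 64 * (real t)^2 / n \<le>
             measure_pmf.prob (alg_out n (RhoA n m r) (RA n m r \<beta> D) (PA n m r (r*\<beta>^2/8)) G) {Regular}"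
            by (rule reg_G[OF m0 _ bp]) (use D_def RR_def mb n0 G r_def in auto)
          have e1: "64 * (real t)^2 / n = 64 * (real RR ^ 4 / n)" using tr by simp
          have e2: "real (2*r*m)^2/n = real RR ^ 2 / n" by (simp add: RR_def)
          have e3: "256 / real r = 1/8" by (simp add: r_def)
          show "2/3 \<le> measure_pmf.prob (alg_out n (RhoA n m r) (RA n m r \<beta> D) (PA n m r (r*\<beta>^2/8)) G) {Regular}"
            using h0 q2 q4 unfolding e1 e2 e3 by linarith
        qed
      qed
    qed
  qed
  show ?thesis
    by (rule exI[of _ "266240^2"], rule exI[of _ "1000 * 266240^4"]) (use main in simp)
qed


end
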